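(* (Binary case.) Let $({\bf x}_i,y_i)$, $i=1,\dots,n$, with ${\bf x}_i\in\mathbb{R}^p$, $y_i\in\{\pm1\}$, and parameters $\lambda_1\ge0$, $\lambda_2>0$, $\lambda_3>0$, $\delta>0$. Let $F(b,{\bf w})=f(b,{\bf w})+g(b,{\bf w})$ with $f(b,{\bf w})=\frac1n\sum_i\phi_H(y_i(b+{\bf x}_i^\top{\bf w}))$ and $g(b,{\bf w})=\lambda_1\|{\bf w}\|_1+\frac{\lambda_2}{2}\|{\bf w}\|^2+\frac{\lambda_3}{2}b^2$, and let $L_f=\frac{1}{n\delta}\sum_i y_i^2(1+\|{\bf x}_i\|^2)$. Let $\{{\bf u}^k=(b^k;{\bf w}^k)\}$ be generated by the B-PGH scheme: ${\bf u}^{-1}={\bf u}^0$, $L_0\le L_f$, $\eta>1$; at step $k$, $\hat{\bf u}^{k-1}={\bf u}^{k-1}+\omega_{k-1}({\bf u}^{k-1}-{\bf u}^{k-2})$ with $0\le\omega_{k-1}\le\sqrt{L_{k-1}/L_k}$; $L_k=\min(\eta^{n_k}L_{k-1},L_f)$ with $n_k$ the smallest nonnegative integer such that $f(\mathrm{prox}_{g/L_k}({\bf v}^{k-1}))\le f(\hat{\bf u}^{k-1})+\langle\nabla f(\hat{\bf u}^{k-1}),\mathrm{prox}_{g/L_k}({\bf v}^{k-1})-\hat{\bf u}^{k-1}\rangle+\frac{L_k}{2}\|\mathrm{prox}_{g/L_k}({\bf v}^{k-1})-\hat{\bf u}^{k-1}\|^2$, where ${\bf v}^{k-1}=\hat{\bf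 u}^{k-1}-\frac{1}{L_k}\nabla f(\hat{\bf u}^{k-1})$; then $b^k=\frac{L_k\hat b^{k-1}-\nabla_b f(\hat{\bf u}^{k-1})}{L_k+\lambda_3}$, ${\bf w}^k=\frac{1}{L_k+\lambda_2}\mathcal{S}_{\lambda_1}(L_k\hat{\bf w}^{k-1}-\nabla_{\bf w}f(\hat{\bf u}^{k-1}))$; and if $F({\bf u}^k)>F({\bf u}^{k-1})$, ${\bf u}^k$ is recomputed with $\hat{\bf u}^{k-1}={\bf u}^{k-1}$. Then $\{{\bf u}^k\}$ converges R-linearly to the unique minimizer of $F$. (Multi-class case.) Let $y_i\in\{1,\dots,J\}$, $\lambda_1\ge0$, $\lambda_2,\lambda_3>0$, $\delta>0$, let $\ell_M({\bf b},\mathbf{W})=\frac1n\sum_{i}\sum_j a_{ij}\phi_H(b_j+{\bf x}_i^\top{\bf w}_j)$, $G({\bf b},\mathbf{W})=\lambda_1\|\mathbf{W}\|_1+\frac{\lambda_2}{2}\|\mathbf{W}\|_F^2+\frac{\lambda_3}{2}\|{\bf b}\|^2$, $\mathcal{U}=\{({\bf b},\mathbf{W}):\mathbf{W}{\bf e}=\mathbf{0},{\bf e}^\top{\bf b}=0\}$, and let $\{\mathbf{U}^k\}$ be generated by the analogous scheme (M-PGH) for $\min_{\mathbf{U}\in\mathcal{U}}\ell_M+G$, i.e. the iteration of the binary case with $f,g,L_f$ replaced by $\ell_M,G,L_m=\frac{J}{n\delta}\sum_i(1+\|{\bf x}_i\|^2)$ and each proximal step taken as the exact minimizer over $\mathcal{U}$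 of $\langle\nabla\ell_M(\hat{\mathbf{U}}^{k-1}),\mathbf{U}-\hat{\mathbf{U}}^{k-1}\rangle+\frac{L_k}{2}\|\mathbf{U}-\hat{\mathbf{U}}^{k-1}\|^2+G(\mathbf{U})$, with $0\le\omega_{k-1}\le\sqrt{L_{k-1}/L_k}$. Then $\{\mathbf{U}^k\}$ converges R-linearly to the unique minimizer of $\ell_M+G$ over $\mathcal{U}$.
   Context: $\phi_H$ is the huberized hinge loss: $\phi_H(t)=0$ for $t>1$, $\frac{(1-t)^2}{2\delta}$ for $1-\delta<t\le1$, $1-t-\frac\delta2$ for $t\le1-\delta$. $\mathcal{S}_\nu(t)=\mathrm{sign}(t)\max(|t|-\nu,0)$ componentwise. $\mathrm{prox}_h({\bf v})=\arg\min_{\bf u}\frac12\|{\bf u}-{\bf v}\|^2+h({\bf u})$. In the multi-class case $a_{ij}=1$ if $y_i\ne j$ and $0$ otherwise, ${\bf w}_j$ is the $j$-th column of $\mathbf{W}\in\mathbb{R}^{p\times J}$, $\|\mathbf{W}\|_1=\sum_{i,j}|w_{ij}|$, ${\bf e}$ is the all-ones vector. R-linear convergence means $\|{\bf u}^k-{\bf u}^*\|\le C\tau^k$ for some $C>0$, $\tau\in(0,1)$. *)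

theory Defs
  imports "HOL-Analysis.Analysis"
begin

definition phiH :: "real \<Rightarrow> real \<Rightarrow> real" where
  "phiH \<delta> t = (if t > 1 then 0
                else if t > 1 - \<delta> then (1 - t)^2 / (2 * \<delta>)
                else 1 - t - \<delta> / 2)"

definition dphiH :: "real \<Rightarrow> real \<Rightarrow> real" where
  "dphiH \<delta> t = (if t > 1 then 0
                 else if t > 1 - \<delta> then - (1 - t) / \<delta>
                 else -1)"

definition soft :: "real \<Rightarrow> real \<Rightarrow> real" where
  "soft \<nu> t = sgn t * max (\<bar>t\<bar> - \<nu>) 0"

definition softvec :: "real \<Rightarrow> real^'p \<Rightarrow> real^'p" where
  "softvec \<nu> v = (\<chi> j. soft \<nu> (v $ j))"

definition l1norm :: "real^'p \<Rightarrow> real" where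
  "l1norm w = (\<Sum>j\<in>UNIV. \<bar>w $ j\<bar>)"

definition prox :: "('u::real_normed_vector \<Rightarrow> real) \<Rightarrow> 'u \<Rightarrow> 'u" where
  "prox h v = arg_min (\<lambda>u. (1/2) * (norm (u - v))^2 + h u) (\<lambda>_. True)"

definition bt_cond :: "('u::real_inner \<Rightarrow> real) \<Rightarrow> ('u \<Rightarrow> 'u) \<Rightarrow> (real \<Rightarrow> 'u \<Rightarrow> 'u)
    \<Rightarrow> real \<Rightarrow> 'u \<Rightarrow> bool" where
  "bt_cond f gf T L uh \<longleftrightarrow>
     f (T L uh) \<le> f uh + inner (gf uh) (T L uh - uh) + L / 2 * (norm (T L uh - uh))^2"

definition bt_L :: "('u::real_inner \<Rightarrow> real) \<Rightarrow> ('u \<Rightarrow> 'u) \<Rightarrow> (real \<Rightarrow> 'u \<Rightarrow> 'u)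
    \<Rightarrow> real \<Rightarrow> real \<Rightarrow> real \<Rightarrow> 'u \<Rightarrow> real" where
  "bt_L f gf T \<eta> Lf Lp uh =
     min (\<eta> ^ (LEAST m::nat. bt_cond f gf T (min (\<eta> ^ m * Lp) Lf) uh) * Lp) Lf"

text \<open>A run of the scheme: u k is u^k, L k is L_k; u (k - 1) at k = 0 is u 0,
  i.e. u^{-1} = u^0.  Tc is the candidate point used in the line-search test,
  Tu the update formula, F the objective used in the restart test.\<close>
definition pgh_run :: "('u::real_inner \<Rightarrow> real) \<Rightarrow> ('u \<Rightarrow> 'u) \<Rightarrow> ('u \<Rightarrow> real)
    \<Rightarrow> (real \<Rightarrow> 'u \<Rightarrow> 'u) \<Rightarrow> (real \<Rightarrow> 'u \<Rightarrow> 'u) \<Rightarrow> real \<Rightarrow> real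
    \<Rightarrow> (nat \<Rightarrow> real) \<Rightarrow> (nat \<Rightarrow> 'u) \<Rightarrow> bool" where
  "pgh_run f gf F Tc Tu \<eta> Lf L u \<longleftrightarrow>
     (\<forall>k. \<exists>\<omega>. 0 \<le> \<omega> \<and>
        (let uh = u k + \<omega> *\<^sub>R (u k - u (k - 1));
             Lt = bt_L f gf Tc \<eta> Lf (L k) uh;
             ut = Tu Lt uh
         in \<omega> \<le> sqrt (L k / Lt) \<and>
            (if F ut \<le> F (u k)
             then L (Suc k) = Lt \<and> u (Suc k) = ut
             else L (Suc k) = bt_L f gf Tc \<eta> Lf (L k) (u k) \<and>
                  u (Suc k) = Tu (bt_L f gf Tc \<eta> Lf (L k) (u k)) (u k))))"

definition fB :: "nat \<Rightarrow> (nat \<Rightarrow> real^'p) \<Rightarrow> (nat \<Rightarrow> real) \<Rightarrow> real \<Rightarrow> real \<times> (real^'p) \<Rightarrow> real" where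
  "fB n x y \<delta> u = (1 / real n) * (\<Sum>i<n. phiH \<delta> (y i * (fst u + x i \<bullet> snd u)))"

definition gradfB :: "nat \<Rightarrow> (nat \<Rightarrow> real^'p) \<Rightarrow> (nat \<Rightarrow> real) \<Rightarrow> real \<Rightarrow> real \<times> (real^'p)
    \<Rightarrow> real \<times> (real^'p)" where
  "gradfB n x y \<delta> u =
     ((1 / real n) * (\<Sum>i<n. dphiH \<delta> (y i * (fst u + x i \<bullet> snd u)) * y i),
      (1 / real n) *\<^sub>R (\<Sum>i<n. (dphiH \<delta> (y i * (fst u + x i \<bullet> snd u)) * y i) *\<^sub>R x i))"

definition gB :: "real \<Rightarrow> real \<Rightarrow> real \<Rightarrow> real \<times> (real^'p) \<Rightarrow> real" where
  "gB lam1 lam2 lam3 u = lam1 * l1norm (snd u) + lam2 / 2 * (norm (snd u))^2 + lam3 / 2 * (fst u)^2"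

definition LfB :: "nat \<Rightarrow> (nat \<Rightarrow> real^'p) \<Rightarrow> (nat \<Rightarrow> real) \<Rightarrow> real \<Rightarrow> real" where
  "LfB n x y \<delta> = 1 / (real n * \<delta>) * (\<Sum>i<n. (y i)^2 * (1 + (norm (x i))^2))"

definition TcB :: "nat \<Rightarrow> (nat \<Rightarrow> real^'p) \<Rightarrow> (nat \<Rightarrow> real) \<Rightarrow> real \<Rightarrow> real \<Rightarrow> real \<Rightarrow> real
    \<Rightarrow> real \<Rightarrow> real \<times> (real^'p) \<Rightarrow> real \<times> (real^'p)" where
  "TcB n x y \<delta> lam1 lam2 lam3 L uh =
     prox (\<lambda>u. gB lam1 lam2 lam3 u / L) (uh - (1 / L) *\<^sub>R gradfB n x y \<delta> uh)"

definition TuB :: "nat \<Rightarrow> (nat \<Rightarrow> real^'p) \<Rightarrow> (nat \<Rightarrow> real) \<Rightarrow> real \<Rightarrow> real \<Rightarrow> real \<Rightarrow> real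
    \<Rightarrow> real \<Rightarrow> real \<times> (real^'p) \<Rightarrow> real \<times> (real^'p)" where
  "TuB n x y \<delta> lam1 lam2 lam3 L uh =
     ((L * fst uh - fst (gradfB n x y \<delta> uh)) / (L + lam3),
      (1 / (L + lam2)) *\<^sub>R softvec lam1 (L *\<^sub>R snd uh - snd (gradfB n x y \<delta> uh)))"

text \<open>b :: real^'j (J = CARD('j)), W :: real^'j^'p with W $ r $ j the (r,j) entry;
  column j W is w_j.  Labels y i :: 'j.\<close>

definition aM :: "(nat \<Rightarrow> 'j) \<Rightarrow> nat \<Rightarrow> 'j \<Rightarrow> real" where
  "aM y i j = (if y i \<noteq> j then 1 else 0)"

definition ellM :: "nat \<Rightarrow> (nat \<Rightarrow> real^'p) \<Rightarrow> (nat \<Rightarrow> 'j::finite) \<Rightarrow> real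
    \<Rightarrow> (real^'j) \<times> (real^'j^'p) \<Rightarrow> real" where
  "ellM n x y \<delta> U = (1 / real n) *
     (\<Sum>i<n. \<Sum>j\<in>UNIV. aM y i j * phiH \<delta> (fst U $ j + x i \<bullet> column j (snd U)))"

definition gradM :: "nat \<Rightarrow> (nat \<Rightarrow> real^'p) \<Rightarrow> (nat \<Rightarrow> 'j::finite) \<Rightarrow> real
    \<Rightarrow> (real^'j) \<times> (real^'j^'p) \<Rightarrow> (real^'j) \<times> (real^'j^'p)" where
  "gradM n x y \<delta> U =
     ((\<chi> j. (1 / real n) * (\<Sum>i<n. aM y i j * dphiH \<delta> (fst U $ j + x i \<bullet> column j (snd U)))),
      (\<chi> r. \<chi> j. (1 / real n) *
         (\<Sum>i<n. aM y i j * dphiH \<delta> (fst U $ j + x i \<bullet> column j (snd U)) * (x i $ r))))"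

definition GM :: "real \<Rightarrow> real \<Rightarrow> real \<Rightarrow> (real^'j) \<times> (real^'j^'p) \<Rightarrow> real" where
  "GM lam1 lam2 lam3 U = lam1 * (\<Sum>r\<in>UNIV. \<Sum>j\<in>UNIV. \<bar>snd U $ r $ j\<bar>)
     + lam2 / 2 * (norm (snd U))^2 + lam3 / 2 * (norm (fst U))^2"

definition UsetM :: "((real^'j) \<times> (real^'j^'p)) set" where
  "UsetM = {U. snd U *v (\<chi> j. 1) = 0 \<and> (\<chi> j. 1) \<bullet> fst U = 0}"

definition LmM :: "nat \<Rightarrow> (nat \<Rightarrow> real^'p) \<Rightarrow> real \<Rightarrow> nat \<Rightarrow> real" where
  "LmM n x \<delta> J = real J / (real n * \<delta>) * (\<Sum>i<n. 1 + (norm (x i))^2)"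

definition TM :: "nat \<Rightarrow> (nat \<Rightarrow> real^'p) \<Rightarrow> (nat \<Rightarrow> 'j::finite) \<Rightarrow> real \<Rightarrow> real \<Rightarrow> real
    \<Rightarrow> real \<Rightarrow> real \<Rightarrow> (real^'j) \<times> (real^'j^'p) \<Rightarrow> (real^'j) \<times> (real^'j^'p)" where
  "TM n x y \<delta> lam1 lam2 lam3 L Uh =
     arg_min (\<lambda>U. inner (gradM n x y \<delta> Uh) (U - Uh) + L / 2 * (norm (U - Uh))^2 + GM lam1 lam2 lam3 U)
             (\<lambda>U. U \<in> UsetM)"

end

theory Submission
  imports Defs
begin

lemma norm_sq_comb:
  fixes a b v :: "'a::real_inner"
  shows "(norm (t *\<^sub>R a + (1-t) *\<^sub>R b - v))^2 = t*(norm (a-v))^2 + (1-t)*(norm (b-v))^2 - t*(1-t)*(norm (a-b))^2"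
proof -
  have e: "t *\<^sub>R a + (1-t) *\<^sub>R b - v = t *\<^sub>R (a - v) + (1-t) *\<^sub>R (b - v)" by (simp add: algebra_simps)
  have e2: "a - b = (a - v) - (b - v)" by simp
  show ?thesis unfolding e e2 power2_norm_eq_inner
    by (simp add: inner_diff inner_add inner_commute algebra_simps power2_eq_square)
qed

lemma sc_min:
  fixes \<phi> :: "'a::real_inner \<Rightarrow> real"
  assumes Sc: "\<And>a b t. a \<in> S \<Longrightarrow> b \<in> S \<Longrightarrow> 0 \<le> t \<Longrightarrow> t \<le> 1 \<Longrightarrow> t *\<^sub>R a + (1-t) *\<^sub>R b \<in> S"
    and sc: "\<And>a b t. a \<in> S \<Longrightarrow> b \<in> S \<Longrightarrow> 0 \<le> t \<Longrightarrow> t \<le> 1 \<Longrightarrow>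
        \<phi> (t *\<^sub>R a + (1-t) *\<^sub>R b) \<le> t * \<phi> a + (1-t) * \<phi> b - c/2 * t*(1-t)*(norm (a-b))^2"
    and c: "0 \<le> c" and m: "m \<in> S" and mmin: "\<And>w. w \<in> S \<Longrightarrow> \<phi> m \<le> \<phi> w" and z: "z \<in> S"
  shows "\<phi> m + c/2*(norm (z-m))^2 \<le> \<phi> z"
proof -
  define A where "A = \<phi> z - \<phi> m"
  define B where "B = c/2*(norm (z-m))^2"
  have B0: "B \<ge> 0" using c by (simp add: B_def)
  have key: "(1-t)*B \<le> A" if t: "0<t" "t<1" for t
  proof -
    have "\<phi> m \<le> \<phi> (t *\<^sub>R z + (1-t) *\<^sub>R m)" using mmin Sc[OF z m] t by simp
    also have "... \<le> t * \<phi> z + (1-t) * \<phi> m - c/2 * t*(1-t)*(norm (z-m))^2" using sc[OF z m] t by simp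
    finally have "t*((1-t)*B) \<le> t * A" by (simp add: A_def B_def algebra_simps)
    thus ?thesis using t by simp
  qed
  show ?thesis
  proof (rule ccontr)
    assume "\<not> ?thesis"
    hence AB: "A < B" by (simp add: A_def B_def)
    have "A \<ge> 0" using key[of "1/2"] B0 by simp
    define t where "t = (B - A)/(2*B)"
    have Bp: "B > 0" using AB \<open>A\<ge>0\<close> by simp
    have t0: "0 < t" "t < 1" using AB Bp \<open>A\<ge>0\<close> by (auto simp: t_def field_simps)
    have "(1-t)*B = (A+B)/2" using Bp by (simp add: t_def field_simps)
    with key[OF t0] AB show False by simp
  qed
qed

definition hm :: "('u::real_inner \<Rightarrow> 'u) \<Rightarrow> ('u \<Rightarrow> real) \<Rightarrow> real \<Rightarrow> 'u \<Rightarrow> 'u \<Rightarrow> real" where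
  "hm gf g L uh z = inner (gf uh) (z - uh) + L/2*(norm (z-uh))^2 + g z"

lemma hm_sc_aux:
  fixes G ga gb t mu L N Na Nb ia ib :: real
  assumes "G \<le> t * ga + (1-t) * gb - mu/2*t*(1-t)*N"
  shows "(t * ia + (1-t) * ib) + L/2*(t*Na + (1-t)*Nb - t*(1-t)*N) + G
    \<le> t * (ia + L/2*Na + ga) + (1-t) * (ib + L/2*Nb + gb) - (L+mu)/2*t*(1-t)*N"
proof -
  have "t * (ia + L/2*Na + ga) + (1-t) * (ib + L/2*Nb + gb) - (L+mu)/2*t*(1-t)*N
     - ((t * ia + (1-t) * ib) + L/2*(t*Na + (1-t)*Nb - t*(1-t)*N))
     = t * ga + (1-t) * gb - mu/2*t*(1-t)*N" by (simp add: field_simps)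
  thus ?thesis using assms by linarith
qed

lemma hm_sc:
  fixes g :: "'u::real_inner \<Rightarrow> real"
  assumes gsc: "g (t *\<^sub>R a + (1-t) *\<^sub>R b) \<le> t * g a + (1-t) * g b - mu/2*t*(1-t)*(norm (a-b))^2"
  shows "hm gf g L uh (t *\<^sub>R a + (1-t) *\<^sub>R b) \<le> t * hm gf g L uh a + (1-t) * hm gf g L uh b - (L+mu)/2*t*(1-t)*(norm (a-b))^2"
proof -
  have lin: "inner (gf uh) (t *\<^sub>R a + (1-t) *\<^sub>R b - uh) = t * inner (gf uh) (a - uh) + (1-t) * inner (gf uh) (b - uh)"
    by (simp add: inner_diff_right inner_add_right algebra_simps)
  have q: "(norm (t *\<^sub>R a + (1-t) *\<^sub>R b - uh))^2 = t*(norm (a-uh))^2 + (1-t)*(norm (b-uh))^2 - t*(1-t)*(norm (a-b))^2" by (rule norm_sq_comb)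
  have "hm gf g L uh (t *\<^sub>R a + (1-t) *\<^sub>R b) = (t * inner (gf uh) (a - uh) + (1-t) * inner (gf uh) (b - uh))
     + L/2*(t*(norm (a-uh))^2 + (1-t)*(norm (b-uh))^2 - t*(1-t)*(norm (a-b))^2) + g (t *\<^sub>R a + (1-t) *\<^sub>R b)"
    unfolding hm_def lin q ..
  also have "... \<le> t * hm gf g L uh a + (1-t) * hm gf g L uh b - (L+mu)/2*t*(1-t)*(norm (a-b))^2"
    unfolding hm_def by (rule hm_sc_aux[OF gsc])
  finally show ?thesis .
qed

lemma step_ineq:
  fixes f g :: "'u::real_inner \<Rightarrow> real"
  assumes Sc: "\<And>a b t. a \<in> S \<Longrightarrow> b \<in> S \<Longrightarrow> 0 \<le> t \<Longrightarrow> t \<le> 1 \<Longrightarrow> t *\<^sub>R a + (1-t) *\<^sub>R b \<in> S"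
    and conv: "\<And>z w. f w + inner (gf w) (z - w) \<le> f z"
    and gsc: "\<And>a b t. 0 \<le> t \<Longrightarrow> t \<le> 1 \<Longrightarrow> g (t *\<^sub>R a + (1-t) *\<^sub>R b) \<le> t * g a + (1-t) * g b - mu/2*t*(1-t)*(norm (a-b))^2"
    and mu: "0 \<le> mu" and L: "0 < L"
    and TS: "Tp \<in> S" "\<forall>z\<in>S. hm gf g L uh Tp \<le> hm gf g L uh z"
    and bt: "f Tp \<le> f uh + inner (gf uh) (Tp - uh) + L/2*(norm (Tp - uh))^2"
    and z: "z \<in> S"
  shows "f Tp + g Tp + (L+mu)/2*(norm (z - Tp))^2 - L/2*(norm (z-uh))^2 \<le> f z + g z"
proof -
  have h1: "\<And>a b t. a \<in> S \<Longrightarrow> b \<in> S \<Longrightarrow> 0 \<le> t \<Longrightarrow> t \<le> 1 \<Longrightarrow>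
        hm gf g L uh (t *\<^sub>R a + (1-t) *\<^sub>R b) \<le> t * hm gf g L uh a + (1-t) * hm gf g L uh b - (L+mu)/2 * t*(1-t)*(norm (a-b))^2"
    by (rule hm_sc, rule gsc) auto
  have h2: "\<And>w. w \<in> S \<Longrightarrow> hm gf g L uh Tp \<le> hm gf g L uh w" using TS by blast
  have h3: "0 \<le> L + mu" using L mu by simp
  have hz: "hm gf g L uh Tp + (L+mu)/2*(norm (z-Tp))^2 \<le> hm gf g L uh z"
    using sc_min[of S "hm gf g L uh" "L+mu" Tp z, OF Sc h1 h3 TS(1) h2 z] by blast
  have "f uh + inner (gf uh) (z - uh) \<le> f z" by (rule conv)
  then show ?thesis using hz bt unfolding hm_def by linarith
qed

lemma btL_props:
  assumes eta: "1 < eta" and Lp: "0 < Lp" "Lp \<le> Lf" and c: "bt_cond f gf Tc Lf uh"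
  shows "Lp \<le> bt_L f gf Tc eta Lf Lp uh \<and> bt_L f gf Tc eta Lf Lp uh \<le> Lf \<and> bt_cond f gf Tc (bt_L f gf Tc eta Lf Lp uh) uh"
proof -
  obtain m where m: "Lf / Lp < eta ^ m" using real_arch_pow[OF eta] by blast
  have "Lf \<le> eta ^ m * Lp" using m Lp by (simp add: field_simps)
  hence "min (eta ^ m * Lp) Lf = Lf" by simp
  hence ex: "bt_cond f gf Tc (min (eta ^ m * Lp) Lf) uh" using c by simp
  define M where "M = (LEAST m::nat. bt_cond f gf Tc (min (eta ^ m * Lp) Lf) uh)"
  have cM: "bt_cond f gf Tc (min (eta ^ M * Lp) Lf) uh" unfolding M_def by (rule LeastI[of "\<lambda>m. bt_cond f gf Tc (min (eta ^ m * Lp) Lf) uh" m]) (rule ex)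
  have "1 \<le> eta ^ M" using eta by simp
  hence "Lp \<le> eta ^ M * Lp" using Lp by simp
  thus ?thesis using cM Lp unfolding bt_L_def M_def[symmetric] by simp
qed

lemma cont_from_bounds:
  fixes f :: "'u::real_inner \<Rightarrow> real"
  assumes conv: "\<And>z w. f w + inner (gf w) (z - w) \<le> f z"
    and desc: "\<And>z w. f z \<le> f w + inner (gf w) (z - w) + K*(norm (z-w))^2"
  shows "continuous_on UNIV f"
proof -
  have "isCont f w" for w
  proof -
    have ev: "\<forall>\<^sub>F z in at w. norm (f z - f w) \<le> norm (gf w) * norm (z - w) + \<bar>K\<bar> * (norm (z-w))^2"
    proof (rule always_eventually, rule allI)
      fix z
      have c1: "\<bar>inner (gf w) (z - w)\<bar> \<le> norm (gf w) * norm (z - w)" by (rule Cauchy_Schwarz_ineq2)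
      have c2: "K*(norm (z-w))^2 \<le> \<bar>K\<bar> * (norm (z-w))^2" by (simp add: mult_right_mono)
      show "norm (f z - f w) \<le> norm (gf w) * norm (z - w) + \<bar>K\<bar> * (norm (z-w))^2"
        using conv[of w z] desc[of z w] c1 c2 by (simp add: abs_le_iff)
    qed
    have lim: "((\<lambda>z. norm (gf w) * norm (z - w) + \<bar>K\<bar> * (norm (z-w))^2) \<longlongrightarrow> 0) (at w)"
    proof -
      have "((\<lambda>z. z - w) \<longlongrightarrow> 0) (at w)" by (rule LIM_zero[OF tendsto_ident_at])
      then have "((\<lambda>z. norm (z - w)) \<longlongrightarrow> 0) (at w)" by (rule tendsto_norm_zero)
      then have "((\<lambda>z. norm (gf w) * norm (z - w) + \<bar>K\<bar> * (norm (z-w))^2) \<longlongrightarrow> norm (gf w) * 0 + \<bar>K\<bar> * 0^2) (at w)"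
        by (intro tendsto_intros)
      thus ?thesis by simp
    qed
    have "((\<lambda>z. f z - f w) \<longlongrightarrow> 0) (at w)" by (rule Lim_null_comparison[OF ev lim])
    hence "(f \<longlongrightarrow> f w) (at w)" by (simp add: LIM_zero_iff)
    thus ?thesis by (simp add: isCont_def)
  qed
  thus ?thesis by (simp add: continuous_at_imp_continuous_on)
qed

lemma exists_min:
  fixes \<phi> :: "'a::euclidean_space \<Rightarrow> real"
  assumes cont: "continuous_on UNIV \<phi>" and Scl: "closed S" and s0: "s0 \<in> S"
    and grow: "\<And>z. a*(norm z)^2 - b*norm z - c \<le> \<phi> z" and a: "0 < a"
  shows "\<exists>m\<in>S. \<forall>w\<in>S. \<phi> m \<le> \<phi> w"
proof -
  define K where "K = S \<inter> {z. \<phi> z \<le> \<phi> s0}"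
  have clK: "closed K" unfolding K_def
    by (intro closed_Int Scl closed_Collect_le cont continuous_on_const)
  define R where "R = max 1 ((\<bar>b\<bar> + \<bar>c + \<phi> s0\<bar>)/a)"
  have bd: "norm z \<le> R" if "z \<in> K" for z
  proof (rule ccontr)
    assume "\<not> norm z \<le> R"
    hence zR: "norm z > R" by simp
    have z1: "norm z > 1" using zR unfolding R_def by simp
    have zb: "norm z * a > \<bar>b\<bar> + \<bar>c + \<phi> s0\<bar>" using zR a unfolding R_def by (simp add: field_simps)
    have "a*(norm z)^2 - b*norm z - c \<le> \<phi> s0" using grow[of z] that unfolding K_def by simp
    moreover have "a*(norm z)^2 > \<bar>b\<bar>*norm z + \<bar>c + \<phi> s0\<bar> * norm z"
    proof -
      have "a*(norm z)^2 = (norm z * a) * norm z" by (simp add: power2_eq_square)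
      also have "... > (\<bar>b\<bar> + \<bar>c + \<phi> s0\<bar>) * norm z" using zb z1 by (intro mult_strict_right_mono) auto
      finally show ?thesis by (simp add: algebra_simps)
    qed
    moreover have "\<bar>c + \<phi> s0\<bar> * norm z \<ge> c + \<phi> s0"
    proof -
      have "\<bar>c + \<phi> s0\<bar> * norm z \<ge> \<bar>c + \<phi> s0\<bar> * 1" using z1 by (intro mult_left_mono) auto
      thus ?thesis by simp
    qed
    moreover have "\<bar>b\<bar>*norm z \<ge> b * norm z" by (simp add: mult_right_mono)
    ultimately show False by linarith
  qed
  have "compact K" using clK bd by (auto simp: compact_eq_bounded_closed bounded_iff)
  moreover have "K \<noteq> {}" using s0 unfolding K_def by auto
  moreover have "continuous_on K \<phi>" using cont by (rule continuous_on_subset) simp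
  ultimately obtain m where m: "m \<in> K" "\<forall>y\<in>K. \<phi> m \<le> \<phi> y" using continuous_attains_inf by blast
  have "\<phi> m \<le> \<phi> w" if "w \<in> S" for w
  proof (cases "\<phi> w \<le> \<phi> s0")
    case True thus ?thesis using m that unfolding K_def by auto
  next
    case False
    have "\<phi> m \<le> \<phi> s0" using m(2) s0 unfolding K_def by auto
    thus ?thesis using False by simp
  qed
  thus ?thesis using m unfolding K_def by auto
qed

lemma sq_split:
  fixes a b :: "'a::real_inner"
  assumes e: "0 < e"
  shows "(norm (a + b))^2 \<le> (1+e)*(norm a)^2 + (1 + 1/e)*(norm b)^2"
proof -
  have "norm (a+b) \<le> norm a + norm b" by (rule norm_triangle_ineq)
  hence "(norm (a+b))^2 \<le> (norm a + norm b)^2" by (simp add: power_mono)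
  also have "... = (norm a)^2 + 2*norm a*norm b + (norm b)^2" by (simp add: power2_eq_square algebra_simps)
  also have "2*norm a*norm b \<le> e*(norm a)^2 + (1/e)*(norm b)^2"
  proof -
    have "0 \<le> (e*norm a - norm b)^2" by simp
    hence "0 \<le> e*(e*(norm a)^2 - 2*norm a*norm b) + (norm b)^2" by (simp add: power2_eq_square algebra_simps)
    hence "e*(2*norm a*norm b) \<le> e*(e*(norm a)^2 + (1/e)*(norm b)^2)" using e by (simp add: algebra_simps)
    thus ?thesis using e by simp
  qed
  finally show ?thesis by (simp add: algebra_simps)
qed

lemma seq_lin:
  fixes P D :: "nat \<Rightarrow> real"
  assumes D0: "\<And>j. 0 \<le> D j" and P0: "\<And>j. 0 \<le> P j"
    and dec: "\<And>j. P (Suc j) \<le> P j - mu/2 * D (Suc j)"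
    and up: "\<And>j. P (Suc j) \<le> C2*(D (Suc j) + D j)"
    and mu: "0 < mu" and C2: "0 < C2"
  shows "\<exists>M q. 0 < q \<and> q < 1 \<and> 0 \<le> M \<and> (\<forall>j. P j \<le> M * q^j)"
proof -
  define r where "r = 2*C2/(2*C2+mu)"
  have r0: "0 < r" "r < 1" using mu C2 by (auto simp: r_def field_simps)
  have two: "P (Suc (Suc j)) \<le> r * P j" for j
  proof -
    have a: "P (Suc (Suc j)) \<le> P j - mu/2 * (D (Suc j) + D (Suc (Suc j)))"
      using dec[of j] dec[of "Suc j"] by (simp add: algebra_simps)
    have b: "P (Suc (Suc j)) \<le> C2*(D (Suc (Suc j)) + D (Suc j))" by (rule up)
    have "mu/2 * P (Suc (Suc j)) \<le> C2 * (mu/2 * (D (Suc j) + D (Suc (Suc j))))"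
      using mult_left_mono[OF b, of "mu/2"] mu by (simp add: algebra_simps)
    also have "... \<le> C2 * (P j - P (Suc (Suc j)))" using a C2 by (intro mult_left_mono) auto
    finally have "(2*C2+mu) * P (Suc (Suc j)) \<le> 2*C2 * P j" by (simp add: algebra_simps)
    thus ?thesis using mu C2 by (simp add: r_def field_simps)
  qed
  define q where "q = sqrt r"
  have q0: "0 < q" "q < 1" using r0 by (auto simp: q_def)
  have qq: "q^2 = r" using r0 by (simp add: q_def)
  define M where "M = P 0 / r"
  have M0: "0 \<le> M" using P0[of 0] r0 by (simp add: M_def)
  have PM0: "P 0 \<le> M"
  proof -
    have "r * P 0 \<le> 1 * P 0" using r0 P0[of 0] by (intro mult_right_mono) auto
    thus ?thesis using r0 by (simp add: M_def field_simps)
  qed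
  have mono: "P (Suc j) \<le> P j" for j
  proof -
    have "0 \<le> mu/2 * D (Suc j)" using mu D0[of "Suc j"] by simp
    thus ?thesis using dec[of j] by linarith
  qed
  have "P j \<le> M * q^j \<and> P (Suc j) \<le> M * q^(Suc j)" for j
  proof (induction j)
    case 0
    have "P 1 \<le> P 0" using mono[of 0] by simp
    also have "P 0 \<le> M * q"
    proof -
      have "M * q = P 0 / q" using r0 q0 qq by (simp add: M_def power2_eq_square field_simps)
      also have "... \<ge> P 0" using q0 P0[of 0] by (simp add: field_simps mult_left_le_one_le)
      finally show ?thesis .
    qed
    finally show ?case using PM0 by simp
  next
    case (Suc j)
    have "P (Suc (Suc j)) \<le> r * P j" by (rule two)
    also have "... \<le> r * (M * q^j)" using Suc r0 by (intro mult_left_mono) auto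
    also have "... = M * q^(Suc (Suc j))" using qq by (simp add: power2_eq_square algebra_simps)
    finally show ?case using Suc by simp
  qed
  thus ?thesis using q0 M0 by blast
qed

lemma sq_sum_le: "((x::real) + y)^2 \<le> 2*x^2 + 2*y^2"
proof -
  have "0 \<le> (x - y)^2" by simp
  thus ?thesis by (simp add: power2_eq_square algebra_simps)
qed

theorem gen_main:
  fixes f :: "'u::euclidean_space \<Rightarrow> real" and gf :: "'u \<Rightarrow> 'u" and g :: "'u \<Rightarrow> real"
    and T Tc :: "real \<Rightarrow> 'u \<Rightarrow> 'u" and S :: "'u set" and Lf mu eta :: real
    and L :: "nat \<Rightarrow> real" and u :: "nat \<Rightarrow> 'u"
  assumes conv: "\<And>z w. f w + inner (gf w) (z - w) \<le> f z"
    and desc: "\<And>z w. f z \<le> f w + inner (gf w) (z - w) + Lf/2*(norm (z-w))^2"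
    and gsc: "\<And>a b t. 0 \<le> t \<Longrightarrow> t \<le> 1 \<Longrightarrow> g (t *\<^sub>R a + (1-t) *\<^sub>R b) \<le> t * g a + (1-t) * g b - mu/2*t*(1-t)*(norm (a-b))^2"
    and gq: "\<And>z. mu/2*(norm z)^2 \<le> g z"
    and gcont: "continuous_on UNIV g"
    and mu: "0 < mu"
    and Sc: "\<And>a b t. a \<in> S \<Longrightarrow> b \<in> S \<Longrightarrow> 0 \<le> t \<Longrightarrow> t \<le> 1 \<Longrightarrow> t *\<^sub>R a + (1-t) *\<^sub>R b \<in> S"
    and Scl: "closed S" and S0: "sz \<in> S"
    and TS: "\<And>L uh. 0 < L \<Longrightarrow> T L uh \<in> S \<and> (\<forall>z\<in>S. hm gf g L uh (T L uh) \<le> hm gf g L uh z)"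
    and Tc: "\<And>L uh. 0 < L \<Longrightarrow> Tc L uh = T L uh"
    and eta: "1 < eta" and L0: "0 < L 0" "L 0 \<le> Lf"
    and run: "pgh_run f gf (\<lambda>v. f v + g v) Tc T eta Lf L u"
  shows "\<exists>us\<in>S. (\<forall>v\<in>S. f us + g us \<le> f v + g v) \<and>
     (\<forall>v\<in>S. (\<forall>z\<in>S. f v + g v \<le> f z + g z) \<longrightarrow> v = us) \<and>
     (\<exists>C \<tau>. 0 < C \<and> 0 < \<tau> \<and> \<tau> < 1 \<and> (\<forall>k. norm (u k - us) \<le> C * \<tau> ^ k))"
proof -
  define F where "F = (\<lambda>v. f v + g v)"
  have Lfpos: "0 < Lf" using L0 by simp
  have btLf: "bt_cond f gf Tc Lf uh" for uh using desc[of "Tc Lf uh" uh] unfolding bt_cond_def by simp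
  have btT: "bt_cond f gf Tc La uh \<longleftrightarrow> f (T La uh) \<le> f uh + inner (gf uh) (T La uh - uh) + La/2*(norm (T La uh - uh))^2"
    if "0 < La" for La uh using Tc[OF that] unfolding bt_cond_def by simp
  have step: "\<exists>w. 0 \<le> w \<and> L (Suc k) * w^2 \<le> L k \<and> L k \<le> L (Suc k) \<and> L (Suc k) \<le> Lf \<and>
      f (T (L (Suc k)) (u k + w *\<^sub>R (u k - u (k-1)))) \<le> f (u k + w *\<^sub>R (u k - u (k-1)))
         + inner (gf (u k + w *\<^sub>R (u k - u (k-1)))) (T (L (Suc k)) (u k + w *\<^sub>R (u k - u (k-1))) - (u k + w *\<^sub>R (u k - u (k-1))))
         + L (Suc k)/2*(norm (T (L (Suc k)) (u k + w *\<^sub>R (u k - u (k-1))) - (u k + w *\<^sub>R (u k - u (k-1)))))^2 \<and>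
      u (Suc k) = T (L (Suc k)) (u k + w *\<^sub>R (u k - u (k-1)))"
    if Lk: "0 < L k" "L k \<le> Lf" for k
  proof -
    obtain om where om0: "0 \<le> om" and
      omr: "om \<le> sqrt (L k / bt_L f gf Tc eta Lf (L k) (u k + om *\<^sub>R (u k - u (k - 1))))"
      and br: "(L (Suc k) = bt_L f gf Tc eta Lf (L k) (u k + om *\<^sub>R (u k - u (k - 1))) \<and> u (Suc k) = T (bt_L f gf Tc eta Lf (L k) (u k + om *\<^sub>R (u k - u (k - 1)))) (u k + om *\<^sub>R (u k - u (k - 1))))
         \<or> (L (Suc k) = bt_L f gf Tc eta Lf (L k) (u k) \<and> u (Suc k) = T (bt_L f gf Tc eta Lf (L k) (u k)) (u k))"
      using run[unfolded pgh_run_def Let_def, rule_format, of k] by (auto split: if_splits)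
    define uh where "uh = u k + om *\<^sub>R (u k - u (k - 1))"
    show ?thesis
    proof (cases "L (Suc k) = bt_L f gf Tc eta Lf (L k) uh \<and> u (Suc k) = T (bt_L f gf Tc eta Lf (L k) uh) uh")
      case True
      have P: "L k \<le> L (Suc k)" "L (Suc k) \<le> Lf" "bt_cond f gf Tc (L (Suc k)) uh"
        using btL_props[OF eta Lk btLf[of uh]] True by auto
      have Lp: "0 < L (Suc k)" using P Lk by simp
      have "om^2 \<le> (sqrt (L k / L (Suc k)))^2" using omr om0 True unfolding uh_def by (intro power_mono) auto
      also have "... = L k / L (Suc k)" using Lk Lp by simp
      finally have "L (Suc k) * om^2 \<le> L k" using Lp by (simp add: field_simps)
      thus ?thesis using P True om0 btT[OF Lp] unfolding uh_def by (intro exI[of _ om]) auto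
    next
      case False
      hence F2: "L (Suc k) = bt_L f gf Tc eta Lf (L k) (u k) \<and> u (Suc k) = T (bt_L f gf Tc eta Lf (L k) (u k)) (u k)"
        using br unfolding uh_def by blast
      have P: "L k \<le> L (Suc k)" "L (Suc k) \<le> Lf" "bt_cond f gf Tc (L (Suc k)) (u k)"
        using btL_props[OF eta Lk btLf[of "u k"]] F2 by auto
      have Lp: "0 < L (Suc k)" using P Lk by simp
      show ?thesis using P F2 btT[OF Lp] Lk by (intro exI[of _ 0]) auto
    qed
  qed
  have Lb: "0 < L k \<and> L k \<le> Lf" for k
  proof (induction k)
    case 0 then show ?case using L0 by simp
  next
    case (Suc k) then obtain w where "L k \<le> L (Suc k)" "L (Suc k) \<le> Lf" using step by blast
    then show ?case using Suc by simp
  qed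
  have "\<forall>k. \<exists>w. 0 \<le> w \<and> L (Suc k) * w^2 \<le> L k \<and> L k \<le> L (Suc k) \<and> L (Suc k) \<le> Lf \<and>
      f (T (L (Suc k)) (u k + w *\<^sub>R (u k - u (k-1)))) \<le> f (u k + w *\<^sub>R (u k - u (k-1)))
         + inner (gf (u k + w *\<^sub>R (u k - u (k-1)))) (T (L (Suc k)) (u k + w *\<^sub>R (u k - u (k-1))) - (u k + w *\<^sub>R (u k - u (k-1))))
         + L (Suc k)/2*(norm (T (L (Suc k)) (u k + w *\<^sub>R (u k - u (k-1))) - (u k + w *\<^sub>R (u k - u (k-1)))))^2 \<and>
      u (Suc k) = T (L (Suc k)) (u k + w *\<^sub>R (u k - u (k-1)))"
    using step Lb by blast
  from choice[OF this] obtain w where W: "\<forall>k. 0 \<le> w k \<and> L (Suc k) * (w k)^2 \<le> L k \<and> L k \<le> L (Suc k) \<and> L (Suc k) \<le> Lf \<and>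
      f (T (L (Suc k)) (u k + w k *\<^sub>R (u k - u (k-1)))) \<le> f (u k + w k *\<^sub>R (u k - u (k-1)))
         + inner (gf (u k + w k *\<^sub>R (u k - u (k-1)))) (T (L (Suc k)) (u k + w k *\<^sub>R (u k - u (k-1))) - (u k + w k *\<^sub>R (u k - u (k-1))))
         + L (Suc k)/2*(norm (T (L (Suc k)) (u k + w k *\<^sub>R (u k - u (k-1))) - (u k + w k *\<^sub>R (u k - u (k-1)))))^2 \<and>
      u (Suc k) = T (L (Suc k)) (u k + w k *\<^sub>R (u k - u (k-1)))" by blast
  define uh where "uh = (\<lambda>k. u k + w k *\<^sub>R (u k - u (k-1)))"
  have W1: "0 \<le> w k" and W2: "L (Suc k) * (w k)^2 \<le> L k" and W3: "L k \<le> L (Suc k)"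
    and W5: "f (u (Suc k)) \<le> f (uh k) + inner (gf (uh k)) (u (Suc k) - uh k) + L (Suc k)/2*(norm (u (Suc k) - uh k))^2"
    and W6: "u (Suc k) = T (L (Suc k)) (uh k)" for k
    using W[rule_format, of k] unfolding uh_def by metis+
  have uS: "u (Suc k) \<in> S" for k using TS[of "L (Suc k)" "uh k"] Lb[of "Suc k"] W6[of k] by simp
  have key: "F (u (Suc k)) + (L (Suc k)+mu)/2*(norm (z - u (Suc k)))^2 - L (Suc k)/2*(norm (z - uh k))^2 \<le> F z"
    if z: "z \<in> S" for k z
    unfolding F_def
    by (rule step_ineq[OF Sc conv gsc _ _ _ _ W5 z]) (use mu Lb[of "Suc k"] TS[of "L (Suc k)" "uh k"] W6[of k] in auto)
  have fcont: "continuous_on UNIV f" by (rule cont_from_bounds[OF conv desc])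
  have Fcont: "continuous_on UNIV F" unfolding F_def by (intro continuous_on_add fcont gcont)
  have grow: "mu/2*(norm z)^2 - norm (gf 0) * norm z - (- f 0) \<le> F z" for z
  proof -
    have "f 0 + inner (gf 0) (z - 0) \<le> f z" by (rule conv)
    moreover have "\<bar>inner (gf 0) z\<bar> \<le> norm (gf 0) * norm z" by (rule Cauchy_Schwarz_ineq2)
    ultimately show ?thesis using gq[of z] unfolding F_def by (simp add: abs_le_iff)
  qed
  obtain us where us: "us \<in> S" "\<forall>v\<in>S. F us \<le> F v"
    using exists_min[OF Fcont Scl S0 grow] mu by auto
  have Fsc: "F (t *\<^sub>R a + (1-t) *\<^sub>R b) \<le> t * F a + (1-t) * F b - mu/2*t*(1-t)*(norm (a-b))^2"
    if t: "0 \<le> t" "t \<le> 1" for a b t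
  proof -
    define m where "m = t *\<^sub>R a + (1-t) *\<^sub>R b"
    have c1: "f m + inner (gf m) (a - m) \<le> f a" by (rule conv)
    have c2: "f m + inner (gf m) (b - m) \<le> f b" by (rule conv)
    have z: "t *\<^sub>R (a - m) + (1-t) *\<^sub>R (b - m) = 0" unfolding m_def by (simp add: algebra_simps)
    have "t * inner (gf m) (a - m) + (1-t) * inner (gf m) (b - m) = inner (gf m) (t *\<^sub>R (a - m) + (1-t) *\<^sub>R (b - m))"
      by (simp add: inner_add_right)
    hence lin0: "t * inner (gf m) (a - m) + (1-t) * inner (gf m) (b - m) = 0" using z by simp
    have "t * (f m + inner (gf m) (a - m)) + (1-t) * (f m + inner (gf m) (b - m)) \<le> t * f a + (1-t) * f b"
      using c1 c2 t by (intro add_mono mult_left_mono) auto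
    hence "f m \<le> t * f a + (1-t) * f b" using lin0 by (simp add: algebra_simps)
    thus ?thesis using gsc[OF t, of a b] unfolding F_def m_def by (simp add: algebra_simps)
  qed
  have Fq: "F us + mu/2*(norm (z - us))^2 \<le> F z" if "z \<in> S" for z
    by (rule sc_min[of S F mu us z, OF Sc Fsc]) (use mu us that in auto)
  have uniq: "\<forall>v\<in>S. (\<forall>z\<in>S. F v \<le> F z) \<longrightarrow> v = us"
  proof (intro ballI impI)
    fix v assume v: "v \<in> S" "\<forall>z\<in>S. F v \<le> F z"
    have "F us + mu/2*(norm (v - us))^2 \<le> F v" by (rule Fq[OF v(1)])
    moreover have "F v \<le> F us" using v us by auto
    ultimately have "mu/2*(norm (v - us))^2 \<le> 0" by linarith
    moreover have "0 < mu/2" using mu by simp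
    ultimately have "(norm (v - us))^2 \<le> 0" by (simp add: mult_le_0_iff)
    thus "v = us" by simp
  qed
  define e where "e = (\<lambda>k. F (u k) - F us)"
  define D where "D = (\<lambda>j. (norm (u (Suc j) - u j))^2)"
  define P where "P = (\<lambda>j. e (Suc j) + L (Suc j)/2 * D j)"
  have e0: "0 \<le> e (Suc j)" for j using us uS[of j] unfolding e_def by auto
  have D0: "0 \<le> D j" for j unfolding D_def by simp
  have P0: "0 \<le> P j" for j unfolding P_def using e0[of j] D0[of j] Lb[of "Suc j"] by simp
  have uhd: "(norm (u (Suc j) - uh (Suc j)))^2 = (w (Suc j))^2 * D j" for j
    unfolding uh_def D_def by (simp add: power_mult_distrib)
  have dec: "P (Suc j) \<le> P j - mu/2 * D (Suc j)" for j
  proof -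
    have k: "F (u (Suc (Suc j))) + (L (Suc (Suc j))+mu)/2*(norm (u (Suc j) - u (Suc (Suc j))))^2 - L (Suc (Suc j))/2*(norm (u (Suc j) - uh (Suc j)))^2 \<le> F (u (Suc j))"
      by (rule key[OF uS[of j]])
    have n1: "(norm (u (Suc j) - u (Suc (Suc j))))^2 = D (Suc j)" unfolding D_def by (simp add: norm_minus_commute)
    have "L (Suc (Suc j)) * (w (Suc j))^2 * D j \<le> L (Suc j) * D j" using W2[of "Suc j"] D0[of j] by (rule mult_right_mono)
    moreover have "L (Suc (Suc j))/2*((w (Suc j))^2 * D j) = (L (Suc (Suc j)) * (w (Suc j))^2 * D j)/2" by simp
    moreover have "(L (Suc (Suc j))+mu)/2 * D (Suc j) = L (Suc (Suc j))/2 * D (Suc j) + mu/2 * D (Suc j)" by (simp add: algebra_simps)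
    moreover have "L (Suc j)/2 * D j = (L (Suc j) * D j)/2" by simp
    ultimately show ?thesis using k unfolding n1 uhd P_def e_def by linarith
  qed
  define C2 where "C2 = Lf*(1 + Lf/mu) + Lf"
  have C2p: "0 < C2"
  proof -
    have "0 < 1 + Lf/mu" using Lfpos mu by (simp add: add_pos_nonneg)
    hence "0 < Lf*(1 + Lf/mu)" using Lfpos by simp
    thus ?thesis using Lfpos by (simp add: C2_def)
  qed
  have up: "P (Suc j) \<le> C2*(D (Suc j) + D j)" for j
  proof -
    define La where "La = L (Suc (Suc j))"
    have La: "0 < La" "La \<le> Lf" using Lb[of "Suc (Suc j)"] unfolding La_def by auto
    have k: "F (u (Suc (Suc j))) + (La+mu)/2*(norm (us - u (Suc (Suc j))))^2 - La/2*(norm (us - uh (Suc j)))^2 \<le> F us"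
      unfolding La_def by (rule key[OF us(1)])
    define A where "A = (norm (us - u (Suc (Suc j))))^2"
    define B where "B = (norm (u (Suc (Suc j)) - uh (Suc j)))^2"
    have split: "(norm (us - uh (Suc j)))^2 \<le> (1 + mu/La)*A + (1 + 1/(mu/La))*B"
      using sq_split[of "mu/La" "us - u (Suc (Suc j))" "u (Suc (Suc j)) - uh (Suc j)"] La mu
      unfolding A_def B_def by simp
    have "La/2*(norm (us - uh (Suc j)))^2 \<le> La/2*((1 + mu/La)*A + (1 + 1/(mu/La))*B)"
      using split La by (intro mult_left_mono) auto
    also have "... = (La+mu)/2*A + La/2*(1+La/mu)*B" using La mu by (simp add: field_simps)
    finally have e2: "e (Suc (Suc j)) \<le> La/2*(1+La/mu)*B" using k unfolding e_def A_def by simp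
    have wl: "(w (Suc j))^2 \<le> 1"
    proof -
      have "L (Suc (Suc j)) * (w (Suc j))^2 \<le> L (Suc (Suc j)) * 1"
        using W2[of "Suc j"] W3[of "Suc j"] by simp
      thus ?thesis using La unfolding La_def by simp
    qed
    have Bb: "B \<le> 2*D (Suc j) + 2*D j"
    proof -
      have "u (Suc (Suc j)) - uh (Suc j) = (u (Suc (Suc j)) - u (Suc j)) - w (Suc j) *\<^sub>R (u (Suc j) - u j)"
        unfolding uh_def by (simp add: algebra_simps)
      hence "norm (u (Suc (Suc j)) - uh (Suc j)) \<le> norm (u (Suc (Suc j)) - u (Suc j)) + norm (w (Suc j) *\<^sub>R (u (Suc j) - u j))"
        by (metis norm_triangle_ineq4)
      hence "B \<le> (norm (u (Suc (Suc j)) - u (Suc j)) + norm (w (Suc j) *\<^sub>R (u (Suc j) - u j)))^2"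
        unfolding B_def by (simp add: power_mono)
      also have "... \<le> 2*(norm (u (Suc (Suc j)) - u (Suc j)))^2 + 2*(norm (w (Suc j) *\<^sub>R (u (Suc j) - u j)))^2"
        by (rule sq_sum_le)
      also have "(norm (w (Suc j) *\<^sub>R (u (Suc j) - u j)))^2 = (w (Suc j))^2 * D j"
        unfolding D_def by (simp add: power_mult_distrib)
      also have "... \<le> 1 * D j" using wl D0[of j] by (rule mult_right_mono)
      finally show ?thesis unfolding D_def by simp
    qed
    have cc: "La/2*(1+La/mu) \<le> Lf/2*(1+Lf/mu)"
      using La mu by (intro mult_mono) (auto simp: divide_right_mono)
    have Bn: "0 \<le> B" unfolding B_def by simp
    have "e (Suc (Suc j)) \<le> Lf/2*(1+Lf/mu)*B"
      using e2 mult_right_mono[OF cc Bn] by linarith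
    also have "... \<le> Lf/2*(1+Lf/mu)*(2*D (Suc j) + 2*D j)"
      using Bb Lfpos mu by (intro mult_left_mono) auto
    finally have e3': "e (Suc (Suc j)) \<le> Lf/2*(1+Lf/mu)*(2*D (Suc j) + 2*D j)" .
    have eq: "\<And>K. Lf/2*K*(2*D (Suc j) + 2*D j) = Lf*K*(D (Suc j) + D j)"
      by (simp add: algebra_simps)
    have e3: "e (Suc (Suc j)) \<le> Lf*(1+Lf/mu)*(D (Suc j) + D j)" using e3' unfolding eq[of "1+Lf/mu"] .
    have "L (Suc (Suc j))/2 * D (Suc j) \<le> Lf * D (Suc j)"
      using La D0[of "Suc j"] unfolding La_def by (intro mult_right_mono) auto
    moreover have "Lf * D (Suc j) \<le> Lf * (D (Suc j) + D j)" using D0[of j] Lfpos by simp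
    ultimately show ?thesis using e3 unfolding P_def C2_def by (simp add: algebra_simps)
  qed
  obtain M q where Mq: "0 < q" "q < 1" "0 \<le> M" "\<forall>j. P j \<le> M * q^j"
    using seq_lin[of D P mu C2, OF D0 P0 dec up mu C2p] by blast
  define tau where "tau = sqrt q"
  have tau: "0 < tau" "tau < 1" using Mq unfolding tau_def by auto
  define C0 where "C0 = sqrt (2*M/mu) / tau"
  have bnd: "norm (u (Suc j) - us) \<le> C0 * tau^(Suc j)" for j
  proof -
    have "mu/2*(norm (u (Suc j) - us))^2 \<le> e (Suc j)" using Fq[OF uS[of j]] unfolding e_def by simp
    also have "... \<le> P j" unfolding P_def using D0[of j] Lb[of "Suc j"] by simp
    also have "... \<le> M * q^j" using Mq by simp
    finally have "(norm (u (Suc j) - us))^2 \<le> (2*M/mu) * q^j" using mu by (simp add: field_simps)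
    hence "norm (u (Suc j) - us) \<le> sqrt ((2*M/mu) * q^j)" by (rule real_le_rsqrt)
    also have "... = sqrt (2*M/mu) * tau^j" unfolding tau_def by (simp only: real_sqrt_mult real_sqrt_power)
    also have "... = C0 * tau^(Suc j)" unfolding C0_def using tau by simp
    finally show ?thesis .
  qed
  define C where "C = C0 + norm (u 0 - us) + 1"
  have C0p: "0 \<le> C0" unfolding C0_def using tau Mq mu by simp
  have Call: "norm (u k - us) \<le> C * tau^k" for k
  proof (cases k)
    case 0 thus ?thesis unfolding C_def using C0p by simp
  next
    case (Suc j)
    have "C0 * tau^k \<le> C * tau^k" unfolding C_def using tau by (intro mult_right_mono) auto
    thus ?thesis using bnd[of j] Suc by simp
  qed
  have Cp: "0 < C"
  proof -
    have "0 \<le> norm (u 0 - us)" by simp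
    thus ?thesis unfolding C_def using C0p by linarith
  qed
  show ?thesis using us uniq Call Cp tau unfolding F_def by blast
qed

definition psi :: "real \<Rightarrow> real \<Rightarrow> real" where
  "psi D b = (if b < 0 then 0 else if b < D then b^2/(2*D) else b - D/2)"
definition dpsi :: "real \<Rightarrow> real \<Rightarrow> real" where
  "dpsi D b = (if b < 0 then 0 else if b < D then b/D else 1)"

lemma psi2: "0 < D \<Longrightarrow> 2*D*psi D b = (if b < 0 then 0 else if b < D then b^2 else 2*D*b - D^2)"
  by (simp add: psi_def power2_eq_square field_simps)
lemma dpsi2: "0 < D \<Longrightarrow> 2*D*(dpsi D b * c) = (if b < 0 then 0 else if b < D then 2*b*c else 2*D*c)"
  by (simp add: dpsi_def field_simps)

lemma psi_conv2:
  assumes D: "0 < D"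
  shows "2*D*psi D b + 2*D*(dpsi D b * (a - b)) \<le> 2*D*psi D a"
proof -
  have s1: "0 \<le> (a-b)*(a-b)" "0 \<le> (b-D)*(b-D)" "0 \<le> (a-D)*(a-D)" "0 \<le> a*a" "0 \<le> b*b" "0 \<le> D*D" by simp_all
  show ?thesis
  proof (cases "b < 0")
    case hb: True thus ?thesis using D unfolding psi2[OF D] dpsi2[OF D] by (auto simp: power2_eq_square)
  next
    case hb0: False
    show ?thesis
    proof (cases "b < D")
      case hb: True
      show ?thesis
      proof (cases "a < 0")
        case ha: True
        have "a * b \<le> 0" using ha hb0 by (simp add: mult_nonpos_nonneg)
        thus ?thesis using ha hb hb0 s1 unfolding psi2[OF D] dpsi2[OF D] by (simp add: algebra_simps power2_eq_square; linarith)
      next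
        case ha0: False
        show ?thesis
        proof (cases "a < D")
          case ha: True
          thus ?thesis using ha ha0 hb hb0 s1 unfolding psi2[OF D] dpsi2[OF D] by (simp add: algebra_simps power2_eq_square; linarith)
        next
          case ha: False
          have p: "0 \<le> (D-b)*(a-D)" using ha hb by simp
          thus ?thesis using ha ha0 hb hb0 s1 unfolding psi2[OF D] dpsi2[OF D] by (simp add: algebra_simps power2_eq_square; linarith)
        qed
      qed
    next
      case hb: False
      show ?thesis
      proof (cases "a < 0")
        case ha: True
        have "0 < D*D" using D by simp
        have "a * D < 0" using ha D by (simp add: mult_neg_pos)
        thus ?thesis using ha hb hb0 s1 D \<open>0 < D*D\<close> unfolding psi2[OF D] dpsi2[OF D] by (simp add: algebra_simps power2_eq_square; linarith)
      next
        case ha0: False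
        thus ?thesis using ha0 hb hb0 s1 unfolding psi2[OF D] dpsi2[OF D] by (cases "a < D"; simp add: algebra_simps power2_eq_square; linarith)
      qed
    qed
  qed
qed

lemma psi_desc2:
  assumes D: "0 < D"
  shows "2*D*psi D a \<le> 2*D*psi D b + 2*D*(dpsi D b * (a - b)) + (a-b)*(a-b)"
proof -
  have s1: "0 \<le> (a-b)*(a-b)" "0 \<le> (b-D)*(b-D)" "0 \<le> (a-D)*(a-D)" "0 \<le> a*a" "0 \<le> b*b" "0 \<le> D*D" by simp_all
  show ?thesis
  proof (cases "b < 0")
    case hb: True
    show ?thesis
    proof (cases "a < 0")
      case ha: True
      thus ?thesis using ha hb s1 unfolding psi2[OF D] dpsi2[OF D] by (simp add: algebra_simps power2_eq_square; linarith)
    next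
      case ha0: False
      have "a * b \<le> 0" using ha0 hb by (simp add: mult_nonneg_nonpos)
      thus ?thesis using ha0 hb s1 unfolding psi2[OF D] dpsi2[OF D] by (cases "a < D"; simp add: algebra_simps power2_eq_square; linarith)
    qed
  next
    case hb0: False
    show ?thesis
    proof (cases "b < D")
      case hb: True
      thus ?thesis using hb hb0 s1 unfolding psi2[OF D] dpsi2[OF D] by (cases "a < 0"; cases "a < D"; simp add: algebra_simps power2_eq_square; linarith)
    next
      case hb: False
      show ?thesis
      proof (cases "a < D")
        case ha: True
        have "0 \<le> (b-D)*(b+D-2*a)" using ha hb D by simp
        thus ?thesis using ha hb hb0 s1 unfolding psi2[OF D] dpsi2[OF D] by (cases "a < 0"; simp add: algebra_simps power2_eq_square; linarith)
      next
        case ha: False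
        thus ?thesis using ha hb hb0 s1 D unfolding psi2[OF D] dpsi2[OF D] by (simp add: algebra_simps power2_eq_square; linarith)
      qed
    qed
  qed
qed

lemma phi_psi: "0 < d \<Longrightarrow> phiH d t = psi d (1 - t)"
  by (simp add: phiH_def psi_def)
lemma dphi_psi: "0 < d \<Longrightarrow> dphiH d t = - dpsi d (1 - t)"
  by (auto simp: dphiH_def dpsi_def minus_divide_left)

lemma phi_conv:
  assumes d: "0 < d"
  shows "phiH d t + dphiH d t * (s - t) \<le> phiH d s"
proof -
  have "2*d*(psi d (1-t) + dpsi d (1-t) * ((1-s) - (1-t))) \<le> 2*d*psi d (1-s)"
    using psi_conv2[OF d, of "1-t" "1-s"] by (simp add: algebra_simps)
  hence "psi d (1-t) + dpsi d (1-t) * ((1-s) - (1-t)) \<le> psi d (1-s)" using d by simp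
  thus ?thesis using d by (simp add: phi_psi dphi_psi algebra_simps)
qed

lemma phi_desc:
  assumes d: "0 < d"
  shows "phiH d s \<le> phiH d t + dphiH d t * (s - t) + (s-t)^2/(2*d)"
proof -
  have h: "2*d*psi d (1-s) \<le> 2*d*psi d (1-t) + 2*d*(dpsi d (1-t) * (t - s)) + (t-s)*(t-s)"
    using psi_desc2[OF d, of "1-s" "1-t"] by simp
  have e: "2*d*(psi d (1-t) + dpsi d (1-t) * (t - s) + (t-s)^2/(2*d)) = 2*d*psi d (1-t) + 2*d*(dpsi d (1-t) * (t - s)) + (t-s)*(t-s)"
    using d by (simp add: distrib_left power2_eq_square)
  have "2*d*psi d (1-s) \<le> 2*d*(psi d (1-t) + dpsi d (1-t) * (t - s) + (t-s)^2/(2*d))" using h e by simp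
  hence "psi d (1-s) \<le> psi d (1-t) + dpsi d (1-t) * (t - s) + (t-s)^2/(2*d)" using d by simp
  moreover have "(t-s)^2 = (s-t)^2" by (simp add: power2_commute)
  moreover have "dpsi d (1-t) * (t - s) = - dpsi d (1-t) * (s - t)" by (simp add: algebra_simps)
  ultimately show ?thesis using d by (simp add: phi_psi dphi_psi)
qed

lemma phi_nonneg: "0 < d \<Longrightarrow> 0 \<le> phiH d t"
  by (simp add: phi_psi psi_def)

lemma cs2:
  fixes x q :: "'a::real_inner" and p :: real
  shows "(p + inner x q)^2 \<le> (1 + (norm x)^2)*(p^2 + (norm q)^2)"
proof -
  define c where "c = inner x q"
  have c1: "\<bar>c\<bar> \<le> norm x * norm q" unfolding c_def by (rule Cauchy_Schwarz_ineq2)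
  have c2: "c^2 \<le> (norm x * norm q)^2" using c1 by (metis abs_ge_zero power2_abs power_mono)
  have c3: "p*c \<le> \<bar>p\<bar> * (norm x * norm q)"
  proof -
    have "p*c \<le> \<bar>p\<bar>*\<bar>c\<bar>" by (metis abs_ge_self abs_mult)
    also have "... \<le> \<bar>p\<bar> * (norm x * norm q)" using c1 by (simp add: mult_left_mono)
    finally show ?thesis .
  qed
  have c4: "0 \<le> (norm x * \<bar>p\<bar> - norm q)^2" by simp
  have "(p + c)^2 = p^2 + 2*(p*c) + c^2" by (simp add: power2_eq_square algebra_simps)
  also have "... \<le> (1 + (norm x)^2)*(p^2 + (norm q)^2)"
    using c2 c3 c4 by (simp add: power2_eq_square algebra_simps; linarith)
  finally show ?thesis unfolding c_def .
qed

lemma norm_pair_sq: "(norm (u::real \<times> 'b::real_normed_vector))^2 = (fst u)^2 + (norm (snd u))^2"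
  by (simp add: norm_prod_def)

lemma gradfB_inner:
  "inner (gradfB n x y \<delta> w) d = (1/real n) * (\<Sum>i<n. dphiH \<delta> (y i * (fst w + x i \<bullet> snd w)) * (y i * (fst d + x i \<bullet> snd d)))"
  unfolding gradfB_def inner_prod_def
  by (simp add: inner_sum_left sum_distrib_left sum.distrib algebra_simps)

lemma fB_conv:
  assumes d: "0 < \<delta>"
  shows "fB n x y \<delta> w + inner (gradfB n x y \<delta> w) (z - w) \<le> fB n x y \<delta> z"
proof -
  have e: "y i * (fst (z - w) + x i \<bullet> snd (z - w)) = y i * (fst z + x i \<bullet> snd z) - y i * (fst w + x i \<bullet> snd w)" for i
    by (simp add: inner_diff_right algebra_simps)
  have "(\<Sum>i<n. phiH \<delta> (y i * (fst w + x i \<bullet> snd w)) + dphiH \<delta> (y i * (fst w + x i \<bullet> snd w)) * (y i * (fst (z - w) + x i \<bullet> snd (z - w))))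
      \<le> (\<Sum>i<n. phiH \<delta> (y i * (fst z + x i \<bullet> snd z)))"
    unfolding e by (intro sum_mono phi_conv[OF d])
  hence "(1/real n) * (\<Sum>i<n. phiH \<delta> (y i * (fst w + x i \<bullet> snd w)) + dphiH \<delta> (y i * (fst w + x i \<bullet> snd w)) * (y i * (fst (z - w) + x i \<bullet> snd (z - w))))
      \<le> (1/real n) * (\<Sum>i<n. phiH \<delta> (y i * (fst z + x i \<bullet> snd z)))"
    by (intro mult_left_mono) auto
  thus ?thesis unfolding fB_def gradfB_inner by (simp add: sum.distrib distrib_left)
qed

lemma fB_desc:
  assumes d: "0 < \<delta>"
  shows "fB n x y \<delta> z \<le> fB n x y \<delta> w + inner (gradfB n x y \<delta> w) (z - w) + LfB n x y \<delta>/2*(norm (z-w))^2"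
proof -
  have e: "y i * (fst (z - w) + x i \<bullet> snd (z - w)) = y i * (fst z + x i \<bullet> snd z) - y i * (fst w + x i \<bullet> snd w)" for i
    by (simp add: inner_diff_right algebra_simps)
  have q: "(y i * (fst (z - w) + x i \<bullet> snd (z - w)))^2/(2*\<delta>) \<le> (y i)^2 * (1 + (norm (x i))^2) * (norm (z-w))^2/(2*\<delta>)" for i
  proof -
    have "(y i * (fst (z - w) + x i \<bullet> snd (z - w)))^2 = (y i)^2 * (fst (z - w) + x i \<bullet> snd (z - w))^2"
      by (simp add: power_mult_distrib)
    also have "... \<le> (y i)^2 * ((1 + (norm (x i))^2)*((fst (z-w))^2 + (norm (snd (z-w)))^2))"
      by (intro mult_left_mono cs2) auto
    also have "... = (y i)^2 * (1 + (norm (x i))^2) * (norm (z-w))^2" by (simp add: norm_pair_sq)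
    finally show ?thesis using d by (intro divide_right_mono) auto
  qed
  define A where "A = (\<Sum>i<n. phiH \<delta> (y i * (fst z + x i \<bullet> snd z)))"
  define B where "B = (\<Sum>i<n. phiH \<delta> (y i * (fst w + x i \<bullet> snd w)))"
  define Cg where "Cg = (\<Sum>i<n. dphiH \<delta> (y i * (fst w + x i \<bullet> snd w)) * (y i * (fst (z - w) + x i \<bullet> snd (z - w))))"
  define Q where "Q = (\<Sum>i<n. (y i)^2 * (1 + (norm (x i))^2) * (norm (z-w))^2/(2*\<delta>))"
  have "A \<le> (\<Sum>i<n. phiH \<delta> (y i * (fst w + x i \<bullet> snd w)) + dphiH \<delta> (y i * (fst w + x i \<bullet> snd w)) * (y i * (fst (z - w) + x i \<bullet> snd (z - w)))
            + (y i)^2 * (1 + (norm (x i))^2) * (norm (z-w))^2/(2*\<delta>))"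
    unfolding A_def
  proof (rule sum_mono)
    fix i
    show "phiH \<delta> (y i * (fst z + x i \<bullet> snd z)) \<le> phiH \<delta> (y i * (fst w + x i \<bullet> snd w)) + dphiH \<delta> (y i * (fst w + x i \<bullet> snd w)) * (y i * (fst (z - w) + x i \<bullet> snd (z - w)))
            + (y i)^2 * (1 + (norm (x i))^2) * (norm (z-w))^2/(2*\<delta>)"
      using phi_desc[OF d, of "y i * (fst z + x i \<bullet> snd z)" "y i * (fst w + x i \<bullet> snd w)"] q[of i] unfolding e by linarith
  qed
  also have "... = B + Cg + Q" unfolding B_def Cg_def Q_def by (simp add: sum.distrib)
  finally have H: "A \<le> B + Cg + Q" .
  have "(1/real n) * A \<le> (1/real n) * (B + Cg + Q)" using H by (intro mult_left_mono) auto
  moreover have "(1/real n) * Q = LfB n x y \<delta>/2*(norm (z-w))^2"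
  proof -
    have "Q = (\<Sum>i<n. (y i)^2 * (1 + (norm (x i))^2)) * ((norm (z-w))^2/(2*\<delta>))"
      unfolding Q_def by (simp add: sum_distrib_right sum_divide_distrib)
    thus ?thesis unfolding LfB_def by (simp add: field_simps)
  qed
  moreover have "fB n x y \<delta> z = (1/real n) * A" unfolding fB_def A_def ..
  moreover have "fB n x y \<delta> w = (1/real n) * B" unfolding fB_def B_def ..
  moreover have "inner (gradfB n x y \<delta> w) (z - w) = (1/real n) * Cg" unfolding gradfB_inner Cg_def ..
  ultimately show ?thesis unfolding distrib_left by linarith
qed

lemma norm_vec_sq: "(norm (v::real^'n))^2 = (\<Sum>j\<in>UNIV. (v$j)^2)"
  by (simp add: norm_vec_def L2_set_def sum_nonneg)

lemma inner_vec_real: "inner (a::real^'n) b = (\<Sum>j\<in>UNIV. a$j * b$j)"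
  by (simp add: inner_vec_def)

lemma l1_comb:
  assumes "0 \<le> t" "t \<le> 1"
  shows "l1norm (t *\<^sub>R a + (1-t) *\<^sub>R b) \<le> t * l1norm a + (1-t) * l1norm (b::real^'n)"
proof -
  have "\<bar>t * a$j + (1-t) * b$j\<bar> \<le> t * \<bar>a$j\<bar> + (1-t) * \<bar>b$j\<bar>" for j
    using assms by (metis abs_mult abs_of_nonneg abs_triangle_ineq diff_ge_0_iff_ge)
  hence "(\<Sum>j\<in>UNIV. \<bar>t * a$j + (1-t) * b$j\<bar>) \<le> (\<Sum>j\<in>UNIV. t * \<bar>a$j\<bar> + (1-t) * \<bar>b$j\<bar>)"
    by (intro sum_mono) auto
  thus ?thesis unfolding l1norm_def by (simp add: sum.distrib sum_distrib_left)
qed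

lemma l1_nonneg: "0 \<le> l1norm v" unfolding l1norm_def by (simp add: sum_nonneg)

lemma lin4: fixes x y p q r :: real shows "x - y = p + (q + r)/2 \<Longrightarrow> 0 \<le> p \<Longrightarrow> 0 \<le> q \<Longrightarrow> 0 \<le> r \<Longrightarrow> y \<le> x"
proof -
  assume h: "x - y = p + (q + r)/2" and a: "0 \<le> p" "0 \<le> q" "0 \<le> r"
  have "0 \<le> p + (q + r)/2" using a by simp
  hence "0 \<le> x - y" by (simp only: h)
  thus "y \<le> x" by simp
qed

lemma gB_aux:
  fixes L1 l A1 B1 mn Nw l2 Nb l3 Wa Wb Ba Bb t :: real
  assumes "L1 \<le> l*(t*A1 + (1-t)*B1)" "mn*(t*(1-t)*Nw) \<le> l2*(t*(1-t)*Nw)" "mn*(t*(1-t)*Nb) \<le> l3*(t*(1-t)*Nb)"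
  shows "L1 + l2/2*(t*Wa + (1-t)*Wb - t*(1-t)*Nw) + l3/2*(t*Ba + (1-t)*Bb - t*(1-t)*Nb)
     \<le> t*(l*A1 + l2/2*Wa + l3/2*Ba) + (1-t)*(l*B1 + l2/2*Wb + l3/2*Bb) - mn/2*t*(1-t)*(Nb + Nw)"
proof -
  have "t*(l*A1 + l2/2*Wa + l3/2*Ba) + (1-t)*(l*B1 + l2/2*Wb + l3/2*Bb) - mn/2*t*(1-t)*(Nb + Nw)
     - (L1 + l2/2*(t*Wa + (1-t)*Wb - t*(1-t)*Nw) + l3/2*(t*Ba + (1-t)*Bb - t*(1-t)*Nb))
     = (l*(t*A1 + (1-t)*B1) - L1) + ((l2*(t*(1-t)*Nw) - mn*(t*(1-t)*Nw)) + (l3*(t*(1-t)*Nb) - mn*(t*(1-t)*Nb)))/2"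
    by (simp add: field_simps)
  from lin4[OF this] show ?thesis using assms by simp
qed

lemma gB_sc:
  assumes l1: "0 \<le> lam1" and l2: "0 < lam2" and l3: "0 < lam3" and t: "0 \<le> t" "t \<le> 1"
  shows "gB lam1 lam2 lam3 (t *\<^sub>R a + (1-t) *\<^sub>R b) \<le> t * gB lam1 lam2 lam3 a + (1-t) * gB lam1 lam2 lam3 b
      - min lam2 lam3/2*t*(1-t)*(norm (a-b))^2"
proof -
  have tt: "0 \<le> t*(1-t)" using t by simp
  have w: "(norm (t *\<^sub>R snd a + (1-t) *\<^sub>R snd b))^2 = t*(norm (snd a))^2 + (1-t)*(norm (snd b))^2 - t*(1-t)*(norm (snd a - snd b))^2"
    using norm_sq_comb[of t "snd a" "snd b" 0] by simp
  have bb: "(t * fst a + (1-t) * fst b)^2 = t*(fst a)^2 + (1-t)*(fst b)^2 - t*(1-t)*(fst a - fst b)^2"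
    by (simp add: power2_eq_square algebra_simps)
  have l: "lam1 * l1norm (t *\<^sub>R snd a + (1-t) *\<^sub>R snd b) \<le> lam1 * (t * l1norm (snd a) + (1-t) * l1norm (snd b))"
    using l1_comb[OF t] l1 by (intro mult_left_mono) auto
  have m1: "min lam2 lam3 * (t*(1-t)*(norm (snd a - snd b))^2) \<le> lam2 * (t*(1-t)*(norm (snd a - snd b))^2)"
    using tt by (intro mult_right_mono) auto
  have m2: "min lam2 lam3 * (t*(1-t)*(fst a - fst b)^2) \<le> lam3 * (t*(1-t)*(fst a - fst b)^2)"
    using tt by (intro mult_right_mono) auto
  have n: "(norm (a-b))^2 = (fst a - fst b)^2 + (norm (snd a - snd b))^2" by (simp add: norm_pair_sq)
  have e: "gB lam1 lam2 lam3 (t *\<^sub>R a + (1-t) *\<^sub>R b) = lam1 * l1norm (t *\<^sub>R snd a + (1-t) *\<^sub>R snd b)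
     + lam2/2*(norm (t *\<^sub>R snd a + (1-t) *\<^sub>R snd b))^2 + lam3/2*(t * fst a + (1-t) * fst b)^2"
    by (simp add: gB_def)
  show ?thesis unfolding e w bb n
    using gB_aux[OF l m1 m2] unfolding gB_def by simp
qed

lemma gB_q:
  assumes l1: "0 \<le> lam1" and l2: "0 < lam2" and l3: "0 < lam3"
  shows "min lam2 lam3/2*(norm z)^2 \<le> gB lam1 lam2 lam3 z"
proof -
  have "min lam2 lam3 * (norm (snd z))^2 \<le> lam2 * (norm (snd z))^2" by (intro mult_right_mono) auto
  moreover have "min lam2 lam3 * (fst z)^2 \<le> lam3 * (fst z)^2" by (intro mult_right_mono) auto
  moreover have "0 \<le> lam1 * l1norm (snd z)" by (rule mult_nonneg_nonneg[OF l1 l1_nonneg])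
  ultimately show ?thesis unfolding gB_def norm_pair_sq by (simp add: algebra_simps; linarith)
qed

lemma gB_cont: "continuous_on UNIV (gB lam1 lam2 lam3 :: real \<times> (real^'p) \<Rightarrow> real)"
  unfolding gB_def[abs_def] l1norm_def
  by (intro continuous_intros)

lemma quad_lb:
  fixes A c z :: real assumes A: "0 < A"
  shows "-(c^2)/(2*A) \<le> A/2*z^2 - c*z"
proof -
  have "A/2*z^2 - c*z - (-(c^2)/(2*A)) = (A*z - c)^2/(2*A)" using A by (simp add: field_simps power2_eq_square)
  moreover have "0 \<le> (A*z - c)^2/(2*A)" using A by simp
  ultimately show ?thesis by simp
qed

lemma quad_at:
  fixes A c :: real assumes A: "0 < A"
  shows "A/2*(c/A)^2 - c*(c/A) = -(c^2)/(2*A)"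
  using A by (simp add: field_simps power2_eq_square)

lemma soft_min:
  fixes A B lam z :: real assumes A: "0 < A" and l: "0 \<le> lam"
  shows "A/2*(soft lam B/A)^2 - B*(soft lam B/A) + lam*\<bar>soft lam B/A\<bar> \<le> A/2*z^2 - B*z + lam*\<bar>z\<bar>"
proof -
  consider "lam < B" | "B < -lam" | "\<bar>B\<bar> \<le> lam" by linarith
  then show ?thesis
  proof cases
    case 1
    have s: "soft lam B = B - lam" using 1 l unfolding soft_def by simp
    have s0: "0 \<le> (B - lam)/A" using 1 A by simp
    have "A/2*((B-lam)/A)^2 - B*((B-lam)/A) + lam*\<bar>(B-lam)/A\<bar> = A/2*((B-lam)/A)^2 - (B-lam)*((B-lam)/A)"
    proof -
      have gen: "A/2*q^2 - B*q + lam*\<bar>q\<bar> = A/2*q^2 - (B-lam)*q" if "\<bar>q\<bar> = q" for q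
        by (simp add: that algebra_simps)
      have "\<bar>(B-lam)/A\<bar> = (B-lam)/A" using s0 by (rule abs_of_nonneg)
      thus ?thesis by (rule gen)
    qed
    also have "... = -((B-lam)^2)/(2*A)" by (rule quad_at[OF A])
    also have "... \<le> A/2*z^2 - (B-lam)*z" by (rule quad_lb[OF A])
    also have "... \<le> A/2*z^2 - B*z + lam*\<bar>z\<bar>"
    proof -
      have "lam * z \<le> lam * \<bar>z\<bar>" using l by (simp add: mult_left_mono)
      thus ?thesis by (simp add: algebra_simps)
    qed
    finally show ?thesis unfolding s .
  next
    case 2
    have s: "soft lam B = B + lam" using 2 l unfolding soft_def by simp
    have s0: "(B + lam)/A \<le> 0" using 2 A by (simp add: divide_nonpos_pos)
    have "A/2*((B+lam)/A)^2 - B*((B+lam)/A) + lam*\<bar>(B+lam)/A\<bar> = A/2*((B+lam)/A)^2 - (B+lam)*((B+lam)/A)"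
    proof -
      have gen: "A/2*q^2 - B*q + lam*\<bar>q\<bar> = A/2*q^2 - (B+lam)*q" if "\<bar>q\<bar> = - q" for q
        by (simp add: that algebra_simps)
      have "\<bar>(B+lam)/A\<bar> = -((B+lam)/A)" using s0 by (rule abs_of_nonpos)
      thus ?thesis by (rule gen)
    qed
    also have "... = -((B+lam)^2)/(2*A)" by (rule quad_at[OF A])
    also have "... \<le> A/2*z^2 - (B+lam)*z" by (rule quad_lb[OF A])
    also have "... \<le> A/2*z^2 - B*z + lam*\<bar>z\<bar>"
    proof -
      have "- (lam * z) \<le> lam * \<bar>z\<bar>" using l by (metis abs_ge_minus_self abs_mult abs_of_nonneg minus_mult_right mult_left_mono)
      thus ?thesis by (simp add: algebra_simps)
    qed
    finally show ?thesis unfolding s .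
  next
    case 3
    have s: "soft lam B = 0" using 3 l unfolding soft_def by simp
    have "B*z \<le> \<bar>B\<bar>*\<bar>z\<bar>" by (metis abs_ge_self abs_mult)
    also have "... \<le> lam*\<bar>z\<bar>" using 3 by (simp add: mult_right_mono)
    finally have "0 \<le> lam*\<bar>z\<bar> - B*z" by simp
    moreover have "0 \<le> A/2*z^2" using A by simp
    ultimately show ?thesis unfolding s by simp
  qed
qed

lemma hmB_decomp:
  fixes uh z :: "real \<times> (real^'p)" and gf :: "real \<times> (real^'p) \<Rightarrow> real \<times> (real^'p)"
  defines "c \<equiv> gf uh"
  shows "hm gf (gB l1 l2 l3) L uh z =
     ((L+l3)/2*(fst z)^2 - (L*fst uh - fst c)*fst z)
     + (\<Sum>j\<in>UNIV. (L+l2)/2*(snd z$j)^2 - (L*(snd uh$j) - snd c$j)*(snd z$j) + l1*\<bar>snd z$j\<bar>)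
     + ((L/2*(fst uh)^2 - fst c * fst uh) + (\<Sum>j\<in>UNIV. L/2*(snd uh$j)^2 - snd c$j * snd uh$j))"
proof -
  have i: "inner c (z - uh) = fst c * (fst z - fst uh) + (\<Sum>j\<in>UNIV. snd c$j * (snd z$j - snd uh$j))"
    by (simp add: inner_prod_def inner_vec_real)
  have nn: "(norm (z - uh))^2 = (fst z - fst uh)^2 + (\<Sum>j\<in>UNIV. (snd z$j - snd uh$j)^2)"
    by (simp add: norm_pair_sq norm_vec_sq)
  have g: "gB l1 l2 l3 z = l1 * (\<Sum>j\<in>UNIV. \<bar>snd z$j\<bar>) + l2/2*(\<Sum>j\<in>UNIV. (snd z$j)^2) + l3/2*(fst z)^2"
    by (simp add: gB_def l1norm_def norm_vec_sq)
  have pw: "(L+l2)/2*(snd z$j)^2 - (L*(snd uh$j) - snd c$j)*(snd z$j) + l1*\<bar>snd z$j\<bar> + (L/2*(snd uh$j)^2 - snd c$j * snd uh$j)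
     = snd c$j * (snd z$j - snd uh$j) + L/2*(snd z$j - snd uh$j)^2 + l1*\<bar>snd z$j\<bar> + l2/2*(snd z$j)^2" for j
    by (simp add: field_simps power2_eq_square)
  have sj: "(\<Sum>j\<in>UNIV. (L+l2)/2*(snd z$j)^2 - (L*(snd uh$j) - snd c$j)*(snd z$j) + l1*\<bar>snd z$j\<bar>)
      + (\<Sum>j\<in>UNIV. L/2*(snd uh$j)^2 - snd c$j * snd uh$j)
     = (\<Sum>j\<in>UNIV. snd c$j * (snd z$j - snd uh$j)) + L/2*(\<Sum>j\<in>UNIV. (snd z$j - snd uh$j)^2)
       + l1 * (\<Sum>j\<in>UNIV. \<bar>snd z$j\<bar>) + l2/2*(\<Sum>j\<in>UNIV. (snd z$j)^2)"
  proof -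
    have "(\<Sum>j\<in>UNIV. (L+l2)/2*(snd z$j)^2 - (L*(snd uh$j) - snd c$j)*(snd z$j) + l1*\<bar>snd z$j\<bar>)
      + (\<Sum>j\<in>UNIV. L/2*(snd uh$j)^2 - snd c$j * snd uh$j)
      = (\<Sum>j\<in>UNIV. (L+l2)/2*(snd z$j)^2 - (L*(snd uh$j) - snd c$j)*(snd z$j) + l1*\<bar>snd z$j\<bar> + (L/2*(snd uh$j)^2 - snd c$j * snd uh$j))"
      by (simp only: sum.distrib)
    also have "... = (\<Sum>j\<in>UNIV. snd c$j * (snd z$j - snd uh$j) + L/2*(snd z$j - snd uh$j)^2 + l1*\<bar>snd z$j\<bar> + l2/2*(snd z$j)^2)"
      by (rule sum.cong[OF refl pw])
    also have "... = (\<Sum>j\<in>UNIV. snd c$j * (snd z$j - snd uh$j)) + L/2*(\<Sum>j\<in>UNIV. (snd z$j - snd uh$j)^2)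
       + l1 * (\<Sum>j\<in>UNIV. \<bar>snd z$j\<bar>) + l2/2*(\<Sum>j\<in>UNIV. (snd z$j)^2)"
      by (simp only: sum.distrib sum_distrib_left)
    finally show ?thesis .
  qed
  have pb: "(L+l3)/2*(fst z)^2 - (L*fst uh - fst c)*fst z + (L/2*(fst uh)^2 - fst c * fst uh)
     = fst c * (fst z - fst uh) + L/2*(fst z - fst uh)^2 + l3/2*(fst z)^2"
    by (simp add: field_simps power2_eq_square)
  show ?thesis unfolding hm_def c_def[symmetric] i nn g
    using sj pb by (simp add: algebra_simps)
qed

lemma TuB_min:
  assumes L: "0 < L" and l1: "0 \<le> l1" and l2: "0 < l2" and l3: "0 < l3"
  shows "hm (gradfB n x y \<delta>) (gB l1 l2 l3) L uh (TuB n x y \<delta> l1 l2 l3 L uh) \<le> hm (gradfB n x y \<delta>) (gB l1 l2 l3) L uh z"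
proof -
  define c where "c = gradfB n x y \<delta> uh"
  define T where "T = TuB n x y \<delta> l1 l2 l3 L uh"
  have Tb: "fst T = (L*fst uh - fst c)/(L+l3)" unfolding T_def TuB_def c_def by simp
  have Tw: "snd T $ j = soft l1 (L*(snd uh$j) - snd c$j)/(L+l2)" for j
    unfolding T_def TuB_def c_def softvec_def by simp
  have A3: "0 < L + l3" and A2: "0 < L + l2" using L l2 l3 by auto
  have pb: "(L+l3)/2*(fst T)^2 - (L*fst uh - fst c)*fst T \<le> (L+l3)/2*(fst z)^2 - (L*fst uh - fst c)*fst z"
    unfolding Tb quad_at[OF A3] by (rule quad_lb[OF A3])
  have pw: "(\<Sum>j\<in>UNIV. (L+l2)/2*(snd T$j)^2 - (L*(snd uh$j) - snd c$j)*(snd T$j) + l1*\<bar>snd T$j\<bar>)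
     \<le> (\<Sum>j\<in>UNIV. (L+l2)/2*(snd z$j)^2 - (L*(snd uh$j) - snd c$j)*(snd z$j) + l1*\<bar>snd z$j\<bar>)"
    unfolding Tw by (intro sum_mono soft_min[OF A2 l1])
  show ?thesis unfolding T_def[symmetric] hmB_decomp c_def[symmetric] using pb pw by simp
qed

lemma TcB_eq:
  assumes L: "0 < L" and l1: "0 \<le> l1" and l2: "0 < l2" and l3: "0 < l3"
  shows "TcB n x y \<delta> l1 l2 l3 L uh = TuB n x y \<delta> l1 l2 l3 L uh"
proof -
  define c where "c = gradfB n x y \<delta> uh"
  define h where "h = hm (gradfB n x y \<delta>) (gB l1 l2 l3) L uh"
  define P where "P = (\<lambda>u. (1/2) * (norm (u - (uh - (1 / L) *\<^sub>R c)))^2 + gB l1 l2 l3 u / L)"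
  define Tu where "Tu = TuB n x y \<delta> l1 l2 l3 L uh"
  have Ph: "P u = h u / L + (1/2)*(norm ((1/L) *\<^sub>R c))^2" for u
  proof -
    have e: "u - (uh - (1 / L) *\<^sub>R c) = (u - uh) + (1/L) *\<^sub>R c" by simp
    have "(norm ((u - uh) + (1/L) *\<^sub>R c))^2 = (norm (u - uh))^2 + 2 * inner (u - uh) ((1/L) *\<^sub>R c) + (norm ((1/L) *\<^sub>R c))^2"
      unfolding power2_norm_eq_inner by (simp add: inner_add inner_commute)
    moreover have "inner (u - uh) ((1/L) *\<^sub>R c) = inner c (u - uh) / L" by (simp add: inner_commute)
    ultimately show ?thesis unfolding P_def h_def hm_def c_def[symmetric] e using L
      by (simp add: field_simps)
  qed
  have hmin: "\<And>z. h Tu \<le> h z" unfolding h_def Tu_def by (rule TuB_min[OF L l1 l2 l3])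
  have Pmin: "P Tu \<le> P z" for z using hmin[of z] L unfolding Ph by (simp add: divide_right_mono)
  have isTu: "is_arg_min P (\<lambda>_. True) Tu" unfolding is_arg_min_def using Pmin by (simp add: not_less)
  define m where "m = arg_min P (\<lambda>_. True)"
  have ism: "is_arg_min P (\<lambda>_. True) m" unfolding m_def arg_min_def by (rule someI[of _ Tu]) (rule isTu)
  hence "P m \<le> P Tu" unfolding is_arg_min_def by (metis not_less)
  hence hm1: "h m \<le> h Tu" using L unfolding Ph by (simp add: divide_right_mono_neg field_simps)
  have sc: "h (t *\<^sub>R a + (1-t) *\<^sub>R b) \<le> t * h a + (1-t) * h b - (L + min l2 l3)/2 * t*(1-t)*(norm (a-b))^2"
    if "0 \<le> t" "t \<le> 1" for a b t
    unfolding h_def by (rule hm_sc, rule gB_sc[OF l1 l2 l3 that])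
  have "h Tu + (L + min l2 l3)/2*(norm (m - Tu))^2 \<le> h m"
    by (rule sc_min[of UNIV h "L + min l2 l3" Tu m]) (use sc hmin L l2 l3 in auto)
  with hm1 have "(L + min l2 l3)/2*(norm (m - Tu))^2 \<le> 0" by simp
  moreover have "0 < (L + min l2 l3)/2" using L l2 l3 by simp
  ultimately have "(norm (m - Tu))^2 \<le> 0" by (simp add: mult_le_0_iff)
  hence "m = Tu" by simp
  thus ?thesis unfolding m_def Tu_def TcB_def prox_def P_def c_def by simp
qed

lemma binary_case:
  fixes x :: "nat \<Rightarrow> real^'p" and u :: "nat \<Rightarrow> real \<times> (real^'p)"
  assumes "0 \<le> lam1" "0 < lam2" "0 < lam3" "0 < \<delta>" "1 < \<eta>" "0 < L 0" "L 0 \<le> LfB n x y \<delta>"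
    and run: "pgh_run (fB n x y \<delta>) (gradfB n x y \<delta>) (\<lambda>v. fB n x y \<delta> v + gB lam1 lam2 lam3 v)
              (TcB n x y \<delta> lam1 lam2 lam3) (TuB n x y \<delta> lam1 lam2 lam3) \<eta> (LfB n x y \<delta>) L u"
  shows "\<exists>us. (\<forall>v. fB n x y \<delta> us + gB lam1 lam2 lam3 us \<le> fB n x y \<delta> v + gB lam1 lam2 lam3 v) \<and>
            (\<forall>v. (\<forall>z. fB n x y \<delta> v + gB lam1 lam2 lam3 v \<le> fB n x y \<delta> z + gB lam1 lam2 lam3 z) \<longrightarrow> v = us) \<and>
            (\<exists>C \<tau>. 0 < C \<and> 0 < \<tau> \<and> \<tau> < 1 \<and> (\<forall>k. norm (u k - us) \<le> C * \<tau> ^ k))"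
proof -
  have "\<exists>us\<in>UNIV. (\<forall>v\<in>UNIV. fB n x y \<delta> us + gB lam1 lam2 lam3 us \<le> fB n x y \<delta> v + gB lam1 lam2 lam3 v) \<and>
     (\<forall>v\<in>UNIV. (\<forall>z\<in>UNIV. fB n x y \<delta> v + gB lam1 lam2 lam3 v \<le> fB n x y \<delta> z + gB lam1 lam2 lam3 z) \<longrightarrow> v = us) \<and>
     (\<exists>C \<tau>. 0 < C \<and> 0 < \<tau> \<and> \<tau> < 1 \<and> (\<forall>k. norm (u k - us) \<le> C * \<tau> ^ k))"
  proof (rule gen_main[where S=UNIV and sz=0 and mu="min lam2 lam3"])
    show "\<And>z w. fB n x y \<delta> w + inner (gradfB n x y \<delta> w) (z - w) \<le> fB n x y \<delta> z" by (rule fB_conv) fact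
    show "\<And>z w. fB n x y \<delta> z \<le> fB n x y \<delta> w + inner (gradfB n x y \<delta> w) (z - w) + LfB n x y \<delta>/2*(norm (z-w))^2" by (rule fB_desc) fact
    show "\<And>a b t. 0 \<le> t \<Longrightarrow> t \<le> 1 \<Longrightarrow> gB lam1 lam2 lam3 (t *\<^sub>R a + (1-t) *\<^sub>R b) \<le> t * gB lam1 lam2 lam3 a + (1-t) * gB lam1 lam2 lam3 b - min lam2 lam3/2*t*(1-t)*(norm (a-b))^2"
      by (rule gB_sc) (use assms in auto)
    show "\<And>z. min lam2 lam3/2*(norm z)^2 \<le> gB lam1 lam2 lam3 z" by (rule gB_q) (use assms in auto)
    show "continuous_on UNIV (gB lam1 lam2 lam3)" by (rule gB_cont)
    show "0 < min lam2 lam3" using assms by simp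
    show "\<And>L uh. 0 < L \<Longrightarrow> TuB n x y \<delta> lam1 lam2 lam3 L uh \<in> UNIV \<and> (\<forall>z\<in>UNIV. hm (gradfB n x y \<delta>) (gB lam1 lam2 lam3) L uh (TuB n x y \<delta> lam1 lam2 lam3 L uh) \<le> hm (gradfB n x y \<delta>) (gB lam1 lam2 lam3) L uh z)"
      using TuB_min assms by blast
    show "\<And>L uh. 0 < L \<Longrightarrow> TcB n x y \<delta> lam1 lam2 lam3 L uh = TuB n x y \<delta> lam1 lam2 lam3 L uh"
      using TcB_eq assms by blast
  qed (use assms in auto)
  thus ?thesis by simp
qed

lemma UsetM_sub: "subspace (UsetM :: ((real^'j) \<times> (real^'j^'p)) set)"
  unfolding subspace_def UsetM_def
  by (auto simp: matrix_vector_mult_add_rdistrib inner_add_right scaleR_matrix_vector_assoc[symmetric])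

lemma UsetM_closed: "closed (UsetM :: ((real^'j) \<times> (real^'j^'p)) set)"
  by (rule closed_subspace[OF UsetM_sub])

lemma UsetM_comb: "a \<in> UsetM \<Longrightarrow> b \<in> UsetM \<Longrightarrow> t *\<^sub>R a + (1-t) *\<^sub>R b \<in> UsetM"
  using UsetM_sub by (metis subspace_add subspace_scale)

lemma UsetM_0: "0 \<in> UsetM"
  using UsetM_sub by (rule subspace_0)

lemma l1M_comb:
  assumes "0 \<le> t" "t \<le> 1"
  shows "(\<Sum>r\<in>UNIV. \<Sum>j\<in>UNIV. \<bar>(t *\<^sub>R a + (1-t) *\<^sub>R b) $ r $ j\<bar>) \<le> t * (\<Sum>r\<in>UNIV. \<Sum>j\<in>UNIV. \<bar>(a::real^'j^'p) $ r $ j\<bar>) + (1-t) * (\<Sum>r\<in>UNIV. \<Sum>j\<in>UNIV. \<bar>b $ r $ j\<bar>)"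
proof -
  have "\<bar>t * a$r$j + (1-t) * b$r$j\<bar> \<le> t * \<bar>a$r$j\<bar> + (1-t) * \<bar>b$r$j\<bar>" for r j
    using assms by (metis abs_mult abs_of_nonneg abs_triangle_ineq diff_ge_0_iff_ge)
  hence "(\<Sum>r\<in>UNIV. \<Sum>j\<in>UNIV. \<bar>t * a$r$j + (1-t) * b$r$j\<bar>) \<le> (\<Sum>r\<in>UNIV. \<Sum>j\<in>UNIV. t * \<bar>a$r$j\<bar> + (1-t) * \<bar>b$r$j\<bar>)"
    by (intro sum_mono) auto
  thus ?thesis by (simp add: sum.distrib sum_distrib_left)
qed

lemma GM_sc:
  assumes l1: "0 \<le> lam1" and l2: "0 < lam2" and l3: "0 < lam3" and t: "0 \<le> t" "t \<le> 1"
  shows "GM lam1 lam2 lam3 (t *\<^sub>R a + (1-t) *\<^sub>R b) \<le> t * GM lam1 lam2 lam3 a + (1-t) * GM lam1 lam2 lam3 (b :: (real^'j) \<times> (real^'j^'p))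
      - min lam2 lam3/2*t*(1-t)*(norm (a-b))^2"
proof -
  have tt: "0 \<le> t*(1-t)" using t by simp
  have w: "(norm (t *\<^sub>R snd a + (1-t) *\<^sub>R snd b))^2 = t*(norm (snd a))^2 + (1-t)*(norm (snd b))^2 - t*(1-t)*(norm (snd a - snd b))^2"
    using norm_sq_comb[of t "snd a" "snd b" 0] by simp
  have bb: "(norm (t *\<^sub>R fst a + (1-t) *\<^sub>R fst b))^2 = t*(norm (fst a))^2 + (1-t)*(norm (fst b))^2 - t*(1-t)*(norm (fst a - fst b))^2"
    using norm_sq_comb[of t "fst a" "fst b" 0] by simp
  have l: "lam1 * (\<Sum>r\<in>UNIV. \<Sum>j\<in>UNIV. \<bar>(t *\<^sub>R snd a + (1-t) *\<^sub>R snd b) $ r $ j\<bar>) \<le> lam1 * (t * (\<Sum>r\<in>UNIV. \<Sum>j\<in>UNIV. \<bar>snd a $ r $ j\<bar>) + (1-t) * (\<Sum>r\<in>UNIV. \<Sum>j\<in>UNIV. \<bar>snd b $ r $ j\<bar>))"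
    using l1M_comb[OF t] l1 by (intro mult_left_mono) auto
  have m1: "min lam2 lam3 * (t*(1-t)*(norm (snd a - snd b))^2) \<le> lam2 * (t*(1-t)*(norm (snd a - snd b))^2)"
    using tt by (intro mult_right_mono) auto
  have m2: "min lam2 lam3 * (t*(1-t)*(norm (fst a - fst b))^2) \<le> lam3 * (t*(1-t)*(norm (fst a - fst b))^2)"
    using tt by (intro mult_right_mono) auto
  have n: "(norm (a-b))^2 = (norm (fst a - fst b))^2 + (norm (snd a - snd b))^2" by (simp add: norm_prod_def)
  have e: "GM lam1 lam2 lam3 (t *\<^sub>R a + (1-t) *\<^sub>R b) = lam1 * (\<Sum>r\<in>UNIV. \<Sum>j\<in>UNIV. \<bar>(t *\<^sub>R snd a + (1-t) *\<^sub>R snd b) $ r $ j\<bar>)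
     + lam2/2*(norm (t *\<^sub>R snd a + (1-t) *\<^sub>R snd b))^2 + lam3/2*(norm (t *\<^sub>R fst a + (1-t) *\<^sub>R fst b))^2"
    unfolding GM_def by simp
  show ?thesis unfolding e w bb n
    using gB_aux[OF l m1 m2] unfolding GM_def by simp
qed

lemma GM_q:
  assumes l1: "0 \<le> lam1" and l2: "0 < lam2" and l3: "0 < lam3"
  shows "min lam2 lam3/2*(norm z)^2 \<le> GM lam1 lam2 lam3 (z :: (real^'j) \<times> (real^'j^'p))"
proof -
  have "min lam2 lam3 * (norm (snd z))^2 \<le> lam2 * (norm (snd z))^2" by (intro mult_right_mono) auto
  moreover have "min lam2 lam3 * (norm (fst z))^2 \<le> lam3 * (norm (fst z))^2" by (intro mult_right_mono) auto
  moreover have "0 \<le> lam1 * (\<Sum>r\<in>UNIV. \<Sum>j\<in>UNIV. \<bar>snd z $ r $ j\<bar>)" by (rule mult_nonneg_nonneg[OF l1]) (simp add: sum_nonneg)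
  moreover have "(norm z)^2 = (norm (fst z))^2 + (norm (snd z))^2" by (simp add: norm_prod_def)
  ultimately show ?thesis unfolding GM_def by (simp add: algebra_simps; linarith)
qed

lemma GM_cont: "continuous_on UNIV (GM lam1 lam2 lam3 :: (real^'j) \<times> (real^'j^'p) \<Rightarrow> real)"
proof -
  have e: "GM lam1 lam2 lam3 = (\<lambda>U::(real^'j) \<times> (real^'j^'p). lam1 * (\<Sum>r\<in>UNIV. \<Sum>j\<in>UNIV. \<bar>snd U $ r $ j\<bar>)
     + lam2 / 2 * (norm (snd U))^2 + lam3 / 2 * (norm (fst U))^2)"
    by (rule ext) (simp add: GM_def)
  show ?thesis unfolding e by (intro continuous_intros)
qed

lemma TM_prop:
  fixes Uh :: "(real^'j) \<times> (real^'j^'p)"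
  assumes L: "0 < L" and l1: "0 \<le> lam1" and l2: "0 < lam2" and l3: "0 < lam3"
  shows "TM n x y \<delta> lam1 lam2 lam3 L Uh \<in> UsetM \<and>
    (\<forall>z\<in>UsetM. hm (gradM n x y \<delta>) (GM lam1 lam2 lam3) L Uh (TM n x y \<delta> lam1 lam2 lam3 L Uh) \<le> hm (gradM n x y \<delta>) (GM lam1 lam2 lam3) L Uh z)"
proof -
  define c where "c = gradM n x y \<delta> Uh"
  define h where "h = hm (gradM n x y \<delta>) (GM lam1 lam2 lam3) L Uh"
  have hc: "continuous_on UNIV h" unfolding h_def hm_def[abs_def]
    by (intro continuous_intros GM_cont)
  have grow: "min lam2 lam3/2*(norm z)^2 - norm c * norm z - norm c * norm Uh \<le> h z" for z
  proof -
    have "\<bar>inner c (z - Uh)\<bar> \<le> norm c * norm (z - Uh)" by (rule Cauchy_Schwarz_ineq2)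
    also have "... \<le> norm c * (norm z + norm Uh)" by (intro mult_left_mono norm_triangle_ineq4) auto
    finally have a: "- (norm c * norm z + norm c * norm Uh) \<le> inner c (z - Uh)" by (simp add: algebra_simps abs_le_iff)
    have b: "0 \<le> L/2*(norm (z - Uh))^2" using L by simp
    show ?thesis using a b GM_q[OF l1 l2 l3, of z] unfolding h_def hm_def c_def by linarith
  qed
  obtain m where m: "m \<in> UsetM" "\<forall>w\<in>UsetM. h m \<le> h w"
    using exists_min[OF hc UsetM_closed UsetM_0 grow] l2 l3 by auto
  have ism: "is_arg_min h (\<lambda>U. U \<in> UsetM) m" unfolding is_arg_min_def using m by (auto simp: not_less)
  have eqT: "TM n x y \<delta> lam1 lam2 lam3 L Uh = arg_min h (\<lambda>U. U \<in> UsetM)"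
    unfolding TM_def h_def hm_def[abs_def] ..
  have "is_arg_min h (\<lambda>U. U \<in> UsetM) (TM n x y \<delta> lam1 lam2 lam3 L Uh)"
    unfolding eqT arg_min_def by (rule someI[of _ m]) (rule ism)
  thus ?thesis unfolding is_arg_min_def h_def by (auto simp: not_less)
qed

lemma col_inner: "inner (v::real^'p) (column j (W::real^'j^'p)) = (\<Sum>r\<in>UNIV. v$r * W$r$j)"
  by (simp add: inner_vec_real column_def)

lemma gradM_inner:
  fixes w d :: "(real^'j) \<times> (real^'j^'p)"
  shows "inner (gradM n x y \<delta> w) d = (1/real n) * (\<Sum>i<n. \<Sum>j\<in>UNIV. aM y i j * dphiH \<delta> (fst w $ j + x i \<bullet> column j (snd w)) * (fst d $ j + x i \<bullet> column j (snd d)))"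
proof -
  define g where "g = (\<lambda>i j. aM y i j * dphiH \<delta> (fst w $ j + x i \<bullet> column j (snd w)))"
  have f1: "fst (gradM n x y \<delta> w) $ j = (1/real n) * (\<Sum>i<n. g i j)" for j unfolding gradM_def g_def by simp
  have f2: "snd (gradM n x y \<delta> w) $ r $ j = (1/real n) * (\<Sum>i<n. g i j * x i $ r)" for r j unfolding gradM_def g_def by simp
  have T1: "inner (fst (gradM n x y \<delta> w)) (fst d) = (1/real n) * (\<Sum>i<n. \<Sum>j\<in>UNIV. g i j * fst d $ j)"
  proof -
    have "inner (fst (gradM n x y \<delta> w)) (fst d) = (\<Sum>j\<in>UNIV. ((1/real n) * (\<Sum>i<n. g i j)) * fst d $ j)"
      by (simp add: inner_vec_real f1)
    also have "... = (1/real n) * (\<Sum>j\<in>UNIV. \<Sum>i<n. g i j * fst d $ j)"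
      by (simp add: sum_distrib_left sum_distrib_right mult.assoc)
    also have "... = (1/real n) * (\<Sum>i<n. \<Sum>j\<in>UNIV. g i j * fst d $ j)"
      by (simp only: sum.swap[of _ UNIV])
    finally show ?thesis .
  qed
  have T2: "inner (snd (gradM n x y \<delta> w)) (snd d) = (1/real n) * (\<Sum>i<n. \<Sum>j\<in>UNIV. g i j * (\<Sum>r\<in>UNIV. x i $ r * snd d $ r $ j))"
  proof -
    have "inner (snd (gradM n x y \<delta> w)) (snd d) = (\<Sum>r\<in>UNIV. \<Sum>j\<in>UNIV. ((1/real n) * (\<Sum>i<n. g i j * x i $ r)) * snd d $ r $ j)"
      by (simp add: inner_vec_def inner_vec_real f2)
    also have "... = (1/real n) * (\<Sum>r\<in>UNIV. \<Sum>j\<in>UNIV. \<Sum>i<n. g i j * x i $ r * snd d $ r $ j)"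
      by (simp add: sum_distrib_left sum_distrib_right mult.assoc)
    also have "(\<Sum>r\<in>UNIV. \<Sum>j\<in>UNIV. \<Sum>i<n. g i j * x i $ r * snd d $ r $ j) = (\<Sum>j\<in>UNIV. \<Sum>r\<in>UNIV. \<Sum>i<n. g i j * x i $ r * snd d $ r $ j)"
      by (rule sum.swap)
    also have "... = (\<Sum>j\<in>UNIV. \<Sum>i<n. \<Sum>r\<in>UNIV. g i j * x i $ r * snd d $ r $ j)"
      by (rule sum.cong[OF refl], rule sum.swap)
    also have "... = (\<Sum>i<n. \<Sum>j\<in>UNIV. \<Sum>r\<in>UNIV. g i j * x i $ r * snd d $ r $ j)"
      by (rule sum.swap)
    also have "... = (\<Sum>i<n. \<Sum>j\<in>UNIV. g i j * (\<Sum>r\<in>UNIV. x i $ r * snd d $ r $ j))"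
      by (simp add: sum_distrib_left mult.assoc)
    finally show ?thesis .
  qed
  have "inner (gradM n x y \<delta> w) d = inner (fst (gradM n x y \<delta> w)) (fst d) + inner (snd (gradM n x y \<delta> w)) (snd d)"
    by (simp add: inner_prod_def)
  also have "... = (1/real n) * (\<Sum>i<n. \<Sum>j\<in>UNIV. g i j * (fst d $ j + (\<Sum>r\<in>UNIV. x i $ r * snd d $ r $ j)))"
    unfolding T1 T2 by (simp add: distrib_left sum.distrib)
  finally show ?thesis unfolding g_def col_inner .
qed

lemma aM_bounds: "0 \<le> aM y i j" "aM y i j \<le> 1" by (auto simp: aM_def)

lemma AM_diff:
  fixes z w :: "(real^'j) \<times> (real^'j^'p)"
  shows "(fst z $ j + x \<bullet> column j (snd z)) - (fst w $ j + x \<bullet> column j (snd w)) = fst (z - w) $ j + x \<bullet> column j (snd (z - w))"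
  by (simp add: col_inner sum_subtractf right_diff_distrib)

lemma norm_vecv_sq: "(norm (v::('a::real_normed_vector)^'n))^2 = (\<Sum>j\<in>UNIV. (norm (v$j))^2)"
  by (simp add: norm_vec_def L2_set_def sum_nonneg)

lemma sum_cols: "(\<Sum>j\<in>UNIV. (norm (column j (W::real^'j^'p)))^2) = (norm W)^2"
proof -
  have "(\<Sum>j\<in>UNIV. (norm (column j W))^2) = (\<Sum>j\<in>UNIV. \<Sum>r\<in>UNIV. (W$r$j)^2)"
    by (simp add: norm_vec_sq column_def)
  also have "... = (\<Sum>r\<in>UNIV. \<Sum>j\<in>UNIV. (W$r$j)^2)" by (rule sum.swap)
  also have "... = (norm W)^2" by (simp add: norm_vecv_sq norm_vec_sq)
  finally show ?thesis .
qed

lemma ellM_conv: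
  fixes z w :: "(real^'j) \<times> (real^'j^'p)"
  assumes d: "0 < \<delta>"
  shows "ellM n x y \<delta> w + inner (gradM n x y \<delta> w) (z - w) \<le> ellM n x y \<delta> z"
proof -
  have per: "aM y i j * phiH \<delta> (fst w $ j + x i \<bullet> column j (snd w)) + aM y i j * dphiH \<delta> (fst w $ j + x i \<bullet> column j (snd w)) * (fst (z - w) $ j + x i \<bullet> column j (snd (z - w)))
     \<le> aM y i j * phiH \<delta> (fst z $ j + x i \<bullet> column j (snd z))" for i j
  proof -
    have "phiH \<delta> (fst w $ j + x i \<bullet> column j (snd w)) + dphiH \<delta> (fst w $ j + x i \<bullet> column j (snd w)) * (fst (z - w) $ j + x i \<bullet> column j (snd (z - w)))
        \<le> phiH \<delta> (fst z $ j + x i \<bullet> column j (snd z))"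
      unfolding AM_diff[symmetric] by (rule phi_conv[OF d])
    from mult_left_mono[OF this aM_bounds(1)] show ?thesis by (simp add: algebra_simps)
  qed
  have "(\<Sum>i<n. \<Sum>j\<in>UNIV. aM y i j * phiH \<delta> (fst w $ j + x i \<bullet> column j (snd w)) + aM y i j * dphiH \<delta> (fst w $ j + x i \<bullet> column j (snd w)) * (fst (z - w) $ j + x i \<bullet> column j (snd (z - w))))
     \<le> (\<Sum>i<n. \<Sum>j\<in>UNIV. aM y i j * phiH \<delta> (fst z $ j + x i \<bullet> column j (snd z)))"
    by (intro sum_mono per)
  hence "(1/real n) * (\<Sum>i<n. \<Sum>j\<in>UNIV. aM y i j * phiH \<delta> (fst w $ j + x i \<bullet> column j (snd w)) + aM y i j * dphiH \<delta> (fst w $ j + x i \<bullet> column j (snd w)) * (fst (z - w) $ j + x i \<bullet> column j (snd (z - w))))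
     \<le> (1/real n) * (\<Sum>i<n. \<Sum>j\<in>UNIV. aM y i j * phiH \<delta> (fst z $ j + x i \<bullet> column j (snd z)))"
    by (intro mult_left_mono) auto
  thus ?thesis unfolding ellM_def gradM_inner by (simp add: sum.distrib distrib_left)
qed

lemma ellM_desc:
  fixes z w :: "(real^'j) \<times> (real^'j^'p)"
  assumes d: "0 < \<delta>"
  shows "ellM n x y \<delta> z \<le> ellM n x y \<delta> w + inner (gradM n x y \<delta> w) (z - w) + LmM n x \<delta> CARD('j)/2*(norm (z-w))^2"
proof -
  define D where "D = z - w"
  define A where "A = (\<Sum>i<n. \<Sum>j\<in>UNIV. aM y i j * phiH \<delta> (fst z $ j + x i \<bullet> column j (snd z)))"
  define B where "B = (\<Sum>i<n. \<Sum>j\<in>UNIV. aM y i j * phiH \<delta> (fst w $ j + x i \<bullet> column j (snd w)))"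
  define Cg where "Cg = (\<Sum>i<n. \<Sum>j\<in>UNIV. aM y i j * dphiH \<delta> (fst w $ j + x i \<bullet> column j (snd w)) * (fst D $ j + x i \<bullet> column j (snd D)))"
  define Q where "Q = (\<Sum>i<n. \<Sum>j\<in>UNIV. (1 + (norm (x i))^2) * ((fst D $ j)^2 + (norm (column j (snd D)))^2) / (2*\<delta>))"
  have per: "aM y i j * phiH \<delta> (fst z $ j + x i \<bullet> column j (snd z))
     \<le> aM y i j * phiH \<delta> (fst w $ j + x i \<bullet> column j (snd w)) + aM y i j * dphiH \<delta> (fst w $ j + x i \<bullet> column j (snd w)) * (fst D $ j + x i \<bullet> column j (snd D))
       + (1 + (norm (x i))^2) * ((fst D $ j)^2 + (norm (column j (snd D)))^2) / (2*\<delta>)" for i j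
  proof -
    define \<Delta> where "\<Delta> = fst D $ j + x i \<bullet> column j (snd D)"
    have ph: "phiH \<delta> (fst z $ j + x i \<bullet> column j (snd z)) \<le> phiH \<delta> (fst w $ j + x i \<bullet> column j (snd w)) + dphiH \<delta> (fst w $ j + x i \<bullet> column j (snd w)) * \<Delta> + \<Delta>^2/(2*\<delta>)"
      using phi_desc[OF d, of "fst z $ j + x i \<bullet> column j (snd z)" "fst w $ j + x i \<bullet> column j (snd w)"]
      unfolding \<Delta>_def D_def AM_diff by simp
    have m: "aM y i j * phiH \<delta> (fst z $ j + x i \<bullet> column j (snd z)) \<le> aM y i j * (phiH \<delta> (fst w $ j + x i \<bullet> column j (snd w)) + dphiH \<delta> (fst w $ j + x i \<bullet> column j (snd w)) * \<Delta> + \<Delta>^2/(2*\<delta>))"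
      by (rule mult_left_mono[OF ph aM_bounds(1)])
    have q0: "0 \<le> \<Delta>^2/(2*\<delta>)" using d by simp
    have q1: "aM y i j * (\<Delta>^2/(2*\<delta>)) \<le> \<Delta>^2/(2*\<delta>)"
      using mult_right_mono[OF aM_bounds(2) q0] by simp
    have q2: "\<Delta>^2/(2*\<delta>) \<le> (1 + (norm (x i))^2) * ((fst D $ j)^2 + (norm (column j (snd D)))^2) / (2*\<delta>)"
      unfolding \<Delta>_def using d by (intro divide_right_mono cs2) auto
    show ?thesis using m q1 q2 unfolding \<Delta>_def by (simp add: algebra_simps)
  qed
  have "A \<le> (\<Sum>i<n. \<Sum>j\<in>UNIV. aM y i j * phiH \<delta> (fst w $ j + x i \<bullet> column j (snd w)) + aM y i j * dphiH \<delta> (fst w $ j + x i \<bullet> column j (snd w)) * (fst D $ j + x i \<bullet> column j (snd D))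
       + (1 + (norm (x i))^2) * ((fst D $ j)^2 + (norm (column j (snd D)))^2) / (2*\<delta>))"
    unfolding A_def by (intro sum_mono per)
  also have "... = B + Cg + Q" unfolding B_def Cg_def Q_def by (simp add: sum.distrib)
  finally have H: "A \<le> B + Cg + Q" .
  have "(1/real n) * A \<le> (1/real n) * (B + Cg + Q)" using H by (intro mult_left_mono) auto
  moreover have "(1/real n) * Q \<le> LmM n x \<delta> CARD('j)/2*(norm (z-w))^2"
  proof -
    have Qe: "Q = (\<Sum>i<n. 1 + (norm (x i))^2) * ((norm D)^2/(2*\<delta>))"
    proof -
      have "(\<Sum>j\<in>UNIV. (fst D $ j)^2 + (norm (column j (snd D)))^2) = (norm D)^2"
        by (simp add: sum.distrib sum_cols norm_vec_sq[symmetric] norm_prod_def)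
      hence "Q = (\<Sum>i<n. (1 + (norm (x i))^2) * ((norm D)^2/(2*\<delta>)))"
        unfolding Q_def by (simp add: sum_distrib_left[symmetric] sum_divide_distrib[symmetric])
      thus ?thesis by (simp add: sum_distrib_right sum_divide_distrib)
    qed
    define X where "X = (\<Sum>i<n. 1 + (norm (x i))^2)"
    have X0: "0 \<le> X" unfolding X_def by (intro sum_nonneg) auto
    have J: "1 \<le> real CARD('j)" by simp
    have N0: "0 \<le> (1/real n) * X * ((norm D)^2/(2*\<delta>))" using X0 d by simp
    have "(1/real n) * Q = (1/real n) * X * ((norm D)^2/(2*\<delta>))" unfolding Qe X_def by simp
    also have "... \<le> real CARD('j) * ((1/real n) * X * ((norm D)^2/(2*\<delta>)))"
      using mult_right_mono[OF J N0] by simp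
    also have "... = LmM n x \<delta> CARD('j)/2*(norm (z-w))^2" unfolding LmM_def X_def D_def by (simp add: field_simps)
    finally show ?thesis .
  qed
  moreover have "ellM n x y \<delta> z = (1/real n) * A" unfolding ellM_def A_def ..
  moreover have "ellM n x y \<delta> w = (1/real n) * B" unfolding ellM_def B_def ..
  moreover have "inner (gradM n x y \<delta> w) (z - w) = (1/real n) * Cg" unfolding gradM_inner Cg_def D_def ..
  ultimately show ?thesis unfolding distrib_left by linarith
qed

lemma multi_case:
  fixes x :: "nat \<Rightarrow> real^'p" and y :: "nat \<Rightarrow> 'j::finite" and U :: "nat \<Rightarrow> (real^'j) \<times> (real^'j^'p)"
  assumes "0 \<le> lam1" "0 < lam2" "0 < lam3" "0 < \<delta>" "1 < \<eta>" "0 < L 0" "L 0 \<le> LmM n x \<delta> CARD('j)"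
    and run: "pgh_run (ellM n x y \<delta>) (gradM n x y \<delta>) (\<lambda>V. ellM n x y \<delta> V + GM lam1 lam2 lam3 V)
              (TM n x y \<delta> lam1 lam2 lam3) (TM n x y \<delta> lam1 lam2 lam3) \<eta> (LmM n x \<delta> CARD('j)) L U"
  shows "\<exists>Us\<in>UsetM. (\<forall>V\<in>UsetM. ellM n x y \<delta> Us + GM lam1 lam2 lam3 Us \<le> ellM n x y \<delta> V + GM lam1 lam2 lam3 V) \<and>
            (\<forall>V\<in>UsetM. (\<forall>Z\<in>UsetM. ellM n x y \<delta> V + GM lam1 lam2 lam3 V \<le> ellM n x y \<delta> Z + GM lam1 lam2 lam3 Z)
                 \<longrightarrow> V = Us) \<and>
            (\<exists>C \<tau>. 0 < C \<and> 0 < \<tau> \<and> \<tau> < 1 \<and> (\<forall>k. norm (U k - Us) \<le> C * \<tau> ^ k))"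
proof (rule gen_main[where S=UsetM and sz=0 and mu="min lam2 lam3"])
  show "\<And>z w. ellM n x y \<delta> w + inner (gradM n x y \<delta> w) (z - w) \<le> ellM n x y \<delta> z" by (rule ellM_conv) fact
  show "\<And>z w. ellM n x y \<delta> z \<le> ellM n x y \<delta> w + inner (gradM n x y \<delta> w) (z - w) + LmM n x \<delta> CARD('j)/2*(norm (z-w))^2"
    by (rule ellM_desc) fact
  show "\<And>a b t. 0 \<le> t \<Longrightarrow> t \<le> 1 \<Longrightarrow> GM lam1 lam2 lam3 (t *\<^sub>R a + (1-t) *\<^sub>R b) \<le> t * GM lam1 lam2 lam3 a + (1-t) * GM lam1 lam2 lam3 b - min lam2 lam3/2*t*(1-t)*(norm (a-b))^2"
    by (rule GM_sc) (use assms in auto)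
  show "\<And>z. min lam2 lam3/2*(norm z)^2 \<le> GM lam1 lam2 lam3 z" by (rule GM_q) (use assms in auto)
  show "continuous_on UNIV (GM lam1 lam2 lam3)" by (rule GM_cont)
  show "0 < min lam2 lam3" using assms by simp
  show "\<And>a b t. a \<in> UsetM \<Longrightarrow> b \<in> UsetM \<Longrightarrow> 0 \<le> t \<Longrightarrow> t \<le> 1 \<Longrightarrow> t *\<^sub>R a + (1-t) *\<^sub>R b \<in> UsetM"
    by (rule UsetM_comb)
  show "closed UsetM" by (rule UsetM_closed)
  show "0 \<in> UsetM" by (rule UsetM_0)
  show "\<And>L uh. 0 < L \<Longrightarrow> TM n x y \<delta> lam1 lam2 lam3 L uh \<in> UsetM \<and> (\<forall>z\<in>UsetM. hm (gradM n x y \<delta>) (GM lam1 lam2 lam3) L uh (TM n x y \<delta> lam1 lam2 lam3 L uh) \<le> hm (gradM n x y \<delta>) (GM lam1 lam2 lam3) L uh z)"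
    using TM_prop assms by blast
qed (use assms in auto)

theorem corollary1:
  shows
  "(\<forall>(n::nat) (x::nat \<Rightarrow> real^'p) (y::nat \<Rightarrow> real) lam1 lam2 lam3 \<delta> \<eta>
       (L::nat \<Rightarrow> real) (u::nat \<Rightarrow> real \<times> (real^'p)).
      0 < n \<longrightarrow> (\<forall>i<n. y i = 1 \<or> y i = -1) \<longrightarrow>
      0 \<le> lam1 \<longrightarrow> 0 < lam2 \<longrightarrow> 0 < lam3 \<longrightarrow> 0 < \<delta> \<longrightarrow>
      1 < \<eta> \<longrightarrow> 0 < L 0 \<longrightarrow> L 0 \<le> LfB n x y \<delta> \<longrightarrow>
      pgh_run (fB n x y \<delta>) (gradfB n x y \<delta>) (\<lambda>v. fB n x y \<delta> v + gB lam1 lam2 lam3 v)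
              (TcB n x y \<delta> lam1 lam2 lam3) (TuB n x y \<delta> lam1 lam2 lam3) \<eta> (LfB n x y \<delta>) L u \<longrightarrow>
      (\<exists>us. (\<forall>v. fB n x y \<delta> us + gB lam1 lam2 lam3 us \<le> fB n x y \<delta> v + gB lam1 lam2 lam3 v) \<and>
            (\<forall>v. (\<forall>z. fB n x y \<delta> v + gB lam1 lam2 lam3 v \<le> fB n x y \<delta> z + gB lam1 lam2 lam3 z) \<longrightarrow> v = us) \<and>
            (\<exists>C \<tau>. 0 < C \<and> 0 < \<tau> \<and> \<tau> < 1 \<and> (\<forall>k. norm (u k - us) \<le> C * \<tau> ^ k))))
   \<and>
   (\<forall>(n::nat) (x::nat \<Rightarrow> real^'p) (y::nat \<Rightarrow> 'j::finite) lam1 lam2 lam3 \<delta> \<eta>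
       (L::nat \<Rightarrow> real) (U::nat \<Rightarrow> (real^'j) \<times> (real^'j^'p)).
      0 < n \<longrightarrow>
      0 \<le> lam1 \<longrightarrow> 0 < lam2 \<longrightarrow> 0 < lam3 \<longrightarrow> 0 < \<delta> \<longrightarrow>
      1 < \<eta> \<longrightarrow> 0 < L 0 \<longrightarrow> L 0 \<le> LmM n x \<delta> CARD('j) \<longrightarrow>
      pgh_run (ellM n x y \<delta>) (gradM n x y \<delta>) (\<lambda>V. ellM n x y \<delta> V + GM lam1 lam2 lam3 V)
              (TM n x y \<delta> lam1 lam2 lam3) (TM n x y \<delta> lam1 lam2 lam3) \<eta> (LmM n x \<delta> CARD('j)) L U \<longrightarrow>
      (\<exists>Us\<in>UsetM. (\<forall>V\<in>UsetM. ellM n x y \<delta> Us + GM lam1 lam2 lam3 Us \<le> ellM n x y \<delta> V + GM lam1 lam2 lam3 V) \<and>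
            (\<forall>V\<in>UsetM. (\<forall>Z\<in>UsetM. ellM n x y \<delta> V + GM lam1 lam2 lam3 V \<le> ellM n x y \<delta> Z + GM lam1 lam2 lam3 Z)
                 \<longrightarrow> V = Us) \<and>
            (\<exists>C \<tau>. 0 < C \<and> 0 < \<tau> \<and> \<tau> < 1 \<and> (\<forall>k. norm (U k - Us) \<le> C * \<tau> ^ k))))"
proof (intro conjI allI impI)
  fix n :: nat and x :: "nat \<Rightarrow> real^'p" and y :: "nat \<Rightarrow> real" and lam1 lam2 lam3 \<delta> \<eta> :: real
    and L :: "nat \<Rightarrow> real" and u :: "nat \<Rightarrow> real \<times> (real^'p)"
  assume "0 < n" "\<forall>i<n. y i = 1 \<or> y i = -1" "0 \<le> lam1" "0 < lam2" "0 < lam3" "0 < \<delta>" "1 < \<eta>" "0 < L 0" "L 0 \<le> LfB n x y \<delta>"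
    "pgh_run (fB n x y \<delta>) (gradfB n x y \<delta>) (\<lambda>v. fB n x y \<delta> v + gB lam1 lam2 lam3 v)
              (TcB n x y \<delta> lam1 lam2 lam3) (TuB n x y \<delta> lam1 lam2 lam3) \<eta> (LfB n x y \<delta>) L u"
  thus "\<exists>us. (\<forall>v. fB n x y \<delta> us + gB lam1 lam2 lam3 us \<le> fB n x y \<delta> v + gB lam1 lam2 lam3 v) \<and>
            (\<forall>v. (\<forall>z. fB n x y \<delta> v + gB lam1 lam2 lam3 v \<le> fB n x y \<delta> z + gB lam1 lam2 lam3 z) \<longrightarrow> v = us) \<and>
            (\<exists>C \<tau>. 0 < C \<and> 0 < \<tau> \<and> \<tau> < 1 \<and> (\<forall>k. norm (u k - us) \<le> C * \<tau> ^ k))"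
    by (intro binary_case) auto
next
  fix n :: nat and x :: "nat \<Rightarrow> real^'p" and y :: "nat \<Rightarrow> 'j" and lam1 lam2 lam3 \<delta> \<eta> :: real
    and L :: "nat \<Rightarrow> real" and U :: "nat \<Rightarrow> (real^'j) \<times> (real^'j^'p)"
  assume "0 < n" "0 \<le> lam1" "0 < lam2" "0 < lam3" "0 < \<delta>" "1 < \<eta>" "0 < L 0" "L 0 \<le> LmM n x \<delta> CARD('j)"
    "pgh_run (ellM n x y \<delta>) (gradM n x y \<delta>) (\<lambda>V. ellM n x y \<delta> V + GM lam1 lam2 lam3 V)
              (TM n x y \<delta> lam1 lam2 lam3) (TM n x y \<delta> lam1 lam2 lam3) \<eta> (LmM n x \<delta> CARD('j)) L U"
  thus "\<exists>Us\<in>UsetM. (\<forall>V\<in>UsetM. ellM n x y \<delta> Us + GM lam1 lam2 lam3 Us \<le> ellM n x y \<delta> V + GM lam1 lam2 lam3 V) \<and>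
            (\<forall>V\<in>UsetM. (\<forall>Z\<in>UsetM. ellM n x y \<delta> V + GM lam1 lam2 lam3 V \<le> ellM n x y \<delta> Z + GM lam1 lam2 lam3 Z)
                 \<longrightarrow> V = Us) \<and>
            (\<exists>C \<tau>. 0 < C \<and> 0 < \<tau> \<and> \<tau> < 1 \<and> (\<forall>k. norm (U k - Us) \<le> C * \<tau> ^ k))"
    by (intro multi_case) auto
qed

end
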